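(* Let $q\in(0,1)$ and let $\tau$ be a GW tree with offspring distribution $p(0)=1-q$, $p(k)=q^2(1-q)^{k-1}$ for $k\ge1$ (which is critical). Let $(\alpha_n,n\in\mathbb N)$ be a sequence of positive integers with $\lim_{n\to\infty}\alpha_n/n^2=0$. Then the conditional law of $\tau$ given $\{\mathcal G_n(\tau)=\alpha_n\}$ converges in distribution to the law of Kesten's tree $\tau^*$ as $n\to\infty$.
   Context: Trees (Neveu formalism): $\mathcal U=\bigcup_{n\ge0}(\mathbb N^* )^n$, $|u|$ the length of $u$. A tree is $\mathbf t\subset\mathcal U$ with $\emptyset\in\mathbf t$, closed under taking prefixes, and such that for every $u\in\mathbf t$ there is $k_u(\mathbf t)\ge0$ with $ui\in\mathbf t\iff1\le i\le k_u(\mathbf t)$. $\mathcal G_n(\mathbf t)=\mathrm{Card}\{u\in\mathbf t:|u|=n\}$. $r_h(\mathbf t)=\{u\in\mathbf t:|u|\le h\}$; convergence in distribution of random trees $T_n\to T$ means $\mathbb P(r_h(T_n)=\mathbf t)\to\mathbb P(r_h(T)=\mathbf t)$ for all $h$ and $\mathbf t$. A GW tree $\tau$ with offspring distribution $p$ satisfies $\mathbb P(r_h(\tau)=\mathbf t)=\prod_{u\in r_{h-1}(\mathbf t)}p(k_u(\mathbf t))$ for all $h\ge1$ and trees $\mathbf t$ of height $\le h$. Kesten's tree $\tau^*$ (for mean $\mu\le1$): with $p^*(n)=np(n)/\mu$, $\tau^*$ is a random tree with a random sequence $(V_k)_{k\ge1}$, $V_1\cdots V_h\in\tau^*$ for all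 $h$, constructed recursively: given $(V_1,\dots,V_h)$ and $r_h(\tau^* )$, the numbers of children of the vertices $v$ with $|v|=h$ are independent, with law $p$ if $v\ne V_1\cdots V_h$ and $p^*$ if $v=V_1\cdots V_h$; then $V_{h+1}$ is uniform on $\{1,\dots,k_{V_1\cdots V_h}(\tau^* )\}$. *)

theory Defs
  imports "HOL-Probability.Probability"
begin

text \<open>Neveu trees: finite words over positive integers, encoded as nat lists.
  Labels 0 are excluded automatically by the children condition.\<close>

type_synonym tree = "nat list set"

definition is_tree :: "tree \<Rightarrow> bool" where
  "is_tree t \<longleftrightarrow> [] \<in> t \<and> (\<forall>u v. u @ v \<in> t \<longrightarrow> u \<in> t) \<and>
     (\<forall>u\<in>t. \<exists>k::nat. \<forall>i. u @ [i] \<in> t \<longleftrightarrow> 1 \<le> i \<and> i \<le> k)"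

definition kids :: "tree \<Rightarrow> nat list \<Rightarrow> nat" where
  "kids t u = card {i. u @ [i] \<in> t}"

definition gen :: "nat \<Rightarrow> tree \<Rightarrow> nat" where
  "gen n t = card {u\<in>t. length u = n}"

definition restr :: "nat \<Rightarrow> tree \<Rightarrow> tree" where
  "restr h t = {u\<in>t. length u \<le> h}"

definition height_le :: "nat \<Rightarrow> tree \<Rightarrow> bool" where
  "height_le h t \<longleftrightarrow> (\<forall>u\<in>t. length u \<le> h)"

definition geom_offspring :: "real \<Rightarrow> nat \<Rightarrow> real" where
  "geom_offspring q k = (if k = 0 then 1 - q else q^2 * (1 - q)^(k - 1))"

definition offspring_mean :: "(nat \<Rightarrow> real) \<Rightarrow> real" where
  "offspring_mean p = (\<Sum>k. real k * p k)"

definition size_biased :: "(nat \<Rightarrow> real) \<Rightarrow> nat \<Rightarrow> real" where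
  "size_biased p n = real n * p n / offspring_mean p"

definition is_GW_tree :: "'a measure \<Rightarrow> ('a \<Rightarrow> tree) \<Rightarrow> (nat \<Rightarrow> real) \<Rightarrow> bool" where
  "is_GW_tree M T p \<longleftrightarrow> prob_space M \<and>
     (\<forall>\<omega>\<in>space M. is_tree (T \<omega>)) \<and>
     (\<forall>h t. {\<omega>\<in>space M. restr h (T \<omega>) = t} \<in> sets M) \<and>
     (\<forall>h\<ge>1. \<forall>t. is_tree t \<and> height_le h t \<longrightarrow>
        measure M {\<omega>\<in>space M. restr h (T \<omega>) = t} = (\<Prod>u\<in>restr (h - 1) t. p (kids t u)))"

definition spine :: "(nat \<Rightarrow> nat) \<Rightarrow> nat \<Rightarrow> nat list" where
  "spine V h = map V [1..<h+1]"

text \<open>Kesten's tree (T, V) on N: the recursive construction, written as the joint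
  law of (r_h(T), V_1...V_h) obtained by the chain rule: spine vertices u (prefixes
  of the spine) of generation < h have k_u with law p*, and the next spine label
  is uniform on {1..k_u}; other vertices have law p, all independent.\<close>
definition is_Kesten_tree :: "'b measure \<Rightarrow> ('b \<Rightarrow> tree) \<Rightarrow> ('b \<Rightarrow> nat \<Rightarrow> nat)
     \<Rightarrow> (nat \<Rightarrow> real) \<Rightarrow> bool" where
  "is_Kesten_tree N T V p \<longleftrightarrow> prob_space N \<and>
     (\<forall>\<omega>\<in>space N. is_tree (T \<omega>) \<and> (\<forall>h. spine (V \<omega>) h \<in> T \<omega>)) \<and>
     (\<forall>h t v. {\<omega>\<in>space N. restr h (T \<omega>) = t \<and> spine (V \<omega>) h = v} \<in> sets N) \<and>
     (\<forall>h\<ge>1. \<forall>t v. is_tree t \<and> height_le h t \<and> length v = h \<and> v \<in> t \<longrightarrow>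
        measure N {\<omega>\<in>space N. restr h (T \<omega>) = t \<and> spine (V \<omega>) h = v} =
          (\<Prod>u\<in>restr (h - 1) t.
             if u = take (length u) v then size_biased p (kids t u) / real (kids t u)
             else p (kids t u)))"

end

theory Submission
  imports Defs "HOL-Real_Asymp.Real_Asymp"
begin

lemma ennreal_suminf_swap:
  fixes f :: "nat \<Rightarrow> nat \<Rightarrow> ennreal"
  shows "(\<Sum>i. \<Sum>j. f i j) = (\<Sum>j. \<Sum>i. f i j)"
proof -
  interpret pair_sigma_finite "count_space (UNIV::nat set)" "count_space (UNIV::nat set)"
    by (intro pair_sigma_finite.intro sigma_finite_measure_count_space_countable) auto
  have "(\<Sum>i. \<Sum>j. f i j) = (\<integral>\<^sup>+ i. (\<integral>\<^sup>+ j. f i j \<partial>count_space UNIV) \<partial>count_space UNIV)"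
    by (simp add: nn_integral_count_space_nat)
  also have "\<dots> = (\<integral>\<^sup>+ j. (\<integral>\<^sup>+ i. f i j \<partial>count_space UNIV) \<partial>count_space UNIV)"
    by (rule Fubini'[symmetric]) (simp add: pair_measure_countable)
  also have "\<dots> = (\<Sum>j. \<Sum>i. f i j)"
    by (simp add: nn_integral_count_space_nat)
  finally show ?thesis .
qed

lemma nonneg_swap_sums:
  fixes u :: "nat \<Rightarrow> nat \<Rightarrow> real"
  assumes nn: "\<And>a b. 0 \<le> u a b" and inner: "\<And>b. (\<lambda>a. u a b) sums v b" and outer: "v sums S"
  shows "summable (u a)" and "(\<lambda>a. \<Sum>b. u a b) sums S"
proof -
  have vnn: "0 \<le> v b" for b using sums_le[OF _ sums_zero inner[of b]] nn by auto
  have e1: "(\<Sum>b. ennreal (v b)) = ennreal S" using suminf_ennreal_eq[OF vnn outer] .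
  have e2: "ennreal (v b) = (\<Sum>a. ennreal (u a b))" for b
    using suminf_ennreal_eq[OF nn inner[of b]] by simp
  have e3: "(\<Sum>a. \<Sum>b. ennreal (u a b)) = ennreal S"
    using e1 e2 ennreal_suminf_swap[of "\<lambda>a b. ennreal (u a b)"] by simp
  have fin: "(\<Sum>b. ennreal (u a b)) \<noteq> top" for a
  proof -
    have "(\<Sum>b. ennreal (u a b)) \<le> (\<Sum>a. \<Sum>b. ennreal (u a b))"
      using sum_le_suminf[of "\<lambda>a. \<Sum>b. ennreal (u a b)" "{a}"] by auto
    also have "\<dots> = ennreal S" using e3 .
    finally show ?thesis by (auto simp: top_unique)
  qed
  show sa: "summable (u a)" for a using summable_suminf_not_top[OF nn fin] .
  have e4: "(\<Sum>b. ennreal (u a b)) = ennreal (\<Sum>b. u a b)" for a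
    using suminf_ennreal2[OF nn sa] .
  have wnn: "0 \<le> (\<Sum>b. u a b)" for a using suminf_nonneg[OF sa] nn by blast
  have e5: "(\<Sum>a. ennreal (\<Sum>b. u a b)) = ennreal S" using e3 e4 by simp
  have sw: "summable (\<lambda>a. \<Sum>b. u a b)"
    using summable_suminf_not_top[OF wnn] e5 by simp
  have "ennreal (\<Sum>a. \<Sum>b. u a b) = ennreal S"
    using e5 suminf_ennreal2[OF wnn sw] by simp
  moreover have "0 \<le> S" using sums_le[OF _ sums_zero outer] vnn by auto
  moreover have "0 \<le> (\<Sum>a. \<Sum>b. u a b)" using suminf_nonneg[OF sw wnn] .
  ultimately have "(\<Sum>a. \<Sum>b. u a b) = S" by simp
  then show "(\<lambda>a. \<Sum>b. u a b) sums S" using sw by (simp add: summable_sums_iff)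
qed

lemma powser_unique_aux:
  fixes c :: "nat \<Rightarrow> real"
  assumes sm: "\<And>s. 0 \<le> s \<Longrightarrow> s < 1 \<Longrightarrow> summable (\<lambda>a. c a * s^a)"
    and z: "\<And>s. 0 \<le> s \<Longrightarrow> s < 1 \<Longrightarrow> (\<Sum>a. c a * s^a) = 0"
  shows "c k = 0"
proof (induction k rule: less_induct)
  case (less k)
  define d where "d a = c (a + k)" for a
  have dz: "(\<Sum>a. d a * s^a) = 0" if s: "0 < s" "s < 1" for s
  proof -
    have "(\<lambda>a. c a * s^a) sums 0" using sm[of s] z[of s] s by (simp add: summable_sums_iff)
    then have "(\<lambda>a. c (a + k) * s^(a+k)) sums (0 - (\<Sum>i<k. c i * s^i))"
      by (subst sums_iff_shift) simp
    moreover have "(\<Sum>i<k. c i * s^i) = 0" using less by simp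
    ultimately have "(\<lambda>a. s^k * (d a * s^a)) sums 0"
      by (simp add: d_def power_add algebra_simps)
    then have "(\<lambda>a. d a * s^a) sums 0" using s sums_mult_iff[of "s^k" "\<lambda>a. d a * s^a" 0]
      by simp
    then show ?thesis by (simp add: sums_iff)
  qed
  have sd: "summable (\<lambda>a. d a * (1/2)^a)"
  proof -
    have "summable (\<lambda>a. c a * (1/2::real)^a)" using sm[of "1/2"] by simp
    then have "summable (\<lambda>a. c (a + k) * (1/2::real)^(a+k))"
      by (subst summable_iff_shift) simp
    then have "summable (\<lambda>a. 2^k * (c (a + k) * (1/2::real)^(a+k)))"
      by (rule summable_mult)
    moreover have "2^k * (c (a + k) * (1/2::real)^(a+k)) = d a * (1/2)^a" for a
      by (simp add: d_def power_add field_simps)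
    ultimately show ?thesis by simp
  qed
  have "isCont (\<lambda>x. \<Sum>a. d a * x^a) (0::real)"
    by (rule isCont_powser[OF sd]) simp
  then have t1: "((\<lambda>x. \<Sum>a. d a * x^a) \<longlongrightarrow> d 0) (at_right 0)"
  proof -
    have "((\<lambda>x. \<Sum>a. d a * x^a) \<longlongrightarrow> (\<Sum>a. d a * 0^a)) (at (0::real))"
      using \<open>isCont _ 0\<close> by (simp only: isCont_def)
    then have "((\<lambda>x. \<Sum>a. d a * x^a) \<longlongrightarrow> d 0) (at (0::real))" by simp
    then show ?thesis by (rule tendsto_mono[OF at_within_le_at])
  qed
  have "eventually (\<lambda>x. (\<Sum>a. d a * x^a) = 0) (at_right (0::real))"
    by (rule eventually_at_rightI[of 0 1]) (auto intro: dz)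
  then have t2: "((\<lambda>x. \<Sum>a. d a * x^a) \<longlongrightarrow> 0) (at_right (0::real))"
    by (rule tendsto_eventually)
  have "d 0 = 0" using tendsto_unique[OF _ t1 t2] by simp
  then show ?case by (simp add: d_def)
qed

fun convp :: "(nat \<Rightarrow> real) \<Rightarrow> nat \<Rightarrow> nat \<Rightarrow> real" where
  "convp f 0 a = (if a = 0 then 1 else 0)"
| "convp f (Suc j) a = (\<Sum>c\<le>a. f c * convp f j (a - c))"

fun Qk :: "(nat \<Rightarrow> real) \<Rightarrow> nat \<Rightarrow> nat \<Rightarrow> nat \<Rightarrow> real" where
  "Qk p 0 j a = (if a = j then 1 else 0)"
| "Qk p (Suc m) j a = (\<Sum>b. Qk p m j b * convp p b a)"

definition Fg :: "real \<Rightarrow> real \<Rightarrow> real" where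
  "Fg \<beta> s = (1 - \<beta>) + \<beta>^2 * s / (1 - (1 - \<beta>) * s)"

definition bet :: "real \<Rightarrow> nat \<Rightarrow> real" where
  "bet q m = q / (q + real m * (1 - q))"

lemma convp_nonneg: "(\<And>c. 0 \<le> f c) \<Longrightarrow> 0 \<le> convp f j a"
  by (induction j arbitrary: a) (auto intro!: sum_nonneg mult_nonneg_nonneg)

lemma convp_zero: "convp f j 0 = f 0 ^ j"
  by (induction j) auto

lemma convp_one: "convp f 1 a = f a"
proof -
  have "(\<Sum>c\<le>a. f c * (if a - c = 0 then 1 else 0)) = (\<Sum>c\<in>{a}. f c)"
    by (rule sum.mono_neutral_cong_right) auto
  then show ?thesis by simp
qed

lemma convp_sums:
  assumes nn: "\<And>c. 0 \<le> f c" and s: "0 \<le> s" and fs: "(\<lambda>a. f a * s^a) sums P"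
  shows "(\<lambda>a. convp f j a * s^a) sums (P^j)"
proof (induction j)
  case 0
  have "(\<lambda>a. convp f 0 a * s^a) = (\<lambda>a. if a = 0 then 1 else 0)" by auto
  then show ?case using sums_single[of 0 "\<lambda>_. (1::real)"] by simp
next
  case (Suc j)
  have e: "convp f (Suc j) a * s^a = (\<Sum>c\<le>a. (f c * s^c) * (convp f j (a - c) * s^(a-c)))" for a
  proof -
    have "convp f (Suc j) a * s^a = (\<Sum>c\<le>a. f c * convp f j (a - c) * s^a)"
      by (simp add: sum_distrib_right)
    also have "\<dots> = (\<Sum>c\<le>a. (f c * s^c) * (convp f j (a - c) * s^(a-c)))"
    proof (intro sum.cong refl)
      fix c assume "c \<in> {..a}"
      then have "s^a = s^c * s^(a-c)" by (metis atMost_iff le_add_diff_inverse power_add)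
      then show "f c * convp f j (a - c) * s^a = (f c * s^c) * (convp f j (a - c) * s^(a-c))"
        by (simp add: mult_ac)
    qed
    finally show ?thesis .
  qed
  have n1: "summable (\<lambda>k. norm (f k * s^k))"
    using fs nn s by (simp add: sums_iff abs_mult)
  have n2: "summable (\<lambda>k. norm (convp f j k * s^k))"
    using Suc convp_nonneg[OF nn] s by (simp add: sums_iff abs_mult)
  have "(\<lambda>a. \<Sum>c\<le>a. (f c * s^c) * (convp f j (a - c) * s^(a-c))) sums ((\<Sum>k. f k * s^k) * (\<Sum>k. convp f j k * s^k))"
    by (rule Cauchy_product_sums[OF n1 n2])
  moreover have "(\<Sum>k. f k * s^k) = P" "(\<Sum>k. convp f j k * s^k) = P^j"
    using fs Suc by (auto simp: sums_iff)
  moreover have "(\<lambda>a. convp f (Suc j) a * s^a) = (\<lambda>a. \<Sum>c\<le>a. (f c * s^c) * (convp f j (a - c) * s^(a-c)))"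
    using e by (rule ext)
  ultimately show ?case by simp
qed

lemma geom_sums:
  assumes "0 < \<beta>" "\<beta> \<le> 1" "0 \<le> s" "s \<le> 1"
  shows "(\<lambda>a. geom_offspring \<beta> a * s^a) sums Fg \<beta> s"
proof -
  have lt: "norm ((1 - \<beta>) * s) < 1" using assms
    by (auto simp: abs_mult) (smt (verit) mult_left_le mult_nonneg_nonneg)
  have "(\<lambda>n. (\<beta>^2 * s) * ((1 - \<beta>) * s)^n) sums ((\<beta>^2 * s) * (1 / (1 - (1 - \<beta>) * s)))"
    by (rule sums_mult[OF geometric_sums[OF lt]])
  moreover have "(\<beta>^2 * s) * ((1 - \<beta>) * s)^n = geom_offspring \<beta> (Suc n) * s^(Suc n)" for n
    by (simp add: geom_offspring_def power_mult_distrib mult_ac)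
  ultimately have "(\<lambda>n. geom_offspring \<beta> (Suc n) * s^(Suc n)) sums (\<beta>^2 * s / (1 - (1 - \<beta>) * s))"
    by simp
  then have "(\<lambda>a. geom_offspring \<beta> a * s^a) sums (\<beta>^2 * s / (1 - (1 - \<beta>) * s) + geom_offspring \<beta> 0 * s^0)"
    by (subst (asm) sums_Suc_iff)
  then show ?thesis by (simp add: Fg_def geom_offspring_def add.commute)
qed

lemma geom_nonneg: "0 \<le> \<beta> \<Longrightarrow> \<beta> \<le> 1 \<Longrightarrow> 0 \<le> geom_offspring \<beta> c"
  by (auto simp: geom_offspring_def)

lemma bet_pos: "0 < q \<Longrightarrow> q < 1 \<Longrightarrow> 0 < bet q m"
  by (auto simp: bet_def intro!: divide_pos_pos add_pos_nonneg)

lemma bet_le1: "0 < q \<Longrightarrow> q < 1 \<Longrightarrow> bet q m \<le> 1"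
  unfolding bet_def by (rule divide_le_eq_1_pos[THEN iffD2]) (auto intro: add_pos_nonneg)

lemma bet_0: "0 < q \<Longrightarrow> bet q 0 = 1"
  by (simp add: bet_def)

lemma bet_1: "0 < q \<Longrightarrow> bet q 1 = q"
  by (simp add: bet_def)

lemma Fg_range:
  assumes "0 < \<beta>" "\<beta> \<le> 1" "0 \<le> s" "s \<le> 1"
  shows "0 \<le> Fg \<beta> s" "Fg \<beta> s \<le> 1"
proof -
  have d: "0 < 1 - (1 - \<beta>) * s" using assms
    by (smt (verit) mult_left_le mult_nonneg_nonneg)
  show "0 \<le> Fg \<beta> s" using assms d by (auto simp: Fg_def intro!: add_nonneg_nonneg divide_nonneg_pos)
  have "\<beta>^2 * s \<le> \<beta> * (1 - (1 - \<beta>) * s)"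
  proof -
    have "\<beta> * (1 - (1 - \<beta>) * s) - \<beta>^2 * s = \<beta> * (1 - s)" by (simp add: algebra_simps power2_eq_square)
    then show ?thesis using assms by (smt (verit) mult_nonneg_nonneg)
  qed
  then have "\<beta>^2 * s / (1 - (1 - \<beta>) * s) \<le> \<beta>" using d by (simp add: divide_le_eq)
  then show "Fg \<beta> s \<le> 1" by (simp add: Fg_def)
qed

lemma Fg_alt:
  assumes E: "1 - (1 - \<beta>) * x \<noteq> 0"
  shows "Fg \<beta> x = 1 - \<beta> * (1 - x) / (1 - (1 - \<beta>) * x)"
proof -
  define E where "E = 1 - (1 - \<beta>) * x"
  have h: "\<beta>^2 * x = \<beta> * E - \<beta> * (1 - x)" unfolding E_def by (simp add: algebra_simps power2_eq_square)
  have "Fg \<beta> x = 1 - \<beta> + (\<beta> * E - \<beta> * (1 - x)) / E" unfolding Fg_def E_def[symmetric] h by simp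
  also have "\<dots> = 1 - \<beta> * (1 - x) / E" using E unfolding E_def[symmetric] by (simp add: diff_divide_distrib)
  finally show ?thesis unfolding E_def .
qed
lemma FgB:
  fixes q B x :: real
  assumes "0 < q" "q \<le> B" "x \<le> 1"
  shows "Fg (q / B) x = 1 - q * (1 - x) / ((B - q) * (1 - x) + q)"
proof -
  have B: "0 < B" using assms by simp
  have p1: "0 < (B - q) * (1 - x) + q" using assms by (smt (verit) mult_nonneg_nonneg)
  have p2: "1 - (1 - q / B) * x = ((B - q) * (1 - x) + q) / B" using B by (simp add: field_simps)
  have "Fg (q/B) x = 1 - (q/B) * (1 - x) / (1 - (1 - q / B) * x)"
    using p1 p2 B by (intro Fg_alt) simp
  also have "\<dots> = 1 - q * (1 - x) / ((B - q) * (1 - x) + q)"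
    using p2 B p1 by simp
  finally show ?thesis .
qed
lemma Fg_comp_r:
  fixes q s r :: real
  assumes q: "0 < q" "q < 1" and s: "0 \<le> s" "s \<le> 1" and r: "0 \<le> r"
  shows "Fg (q / (q + r * (1 - q))) (Fg q s) = Fg (q / (q + (r+1) * (1 - q))) s"
proof -
  define D where "D = 1 - (1 - q) * s"
  have D: "0 < D" unfolding D_def using q s by (smt (verit) mult_left_le mult_nonneg_nonneg)
  have Fq: "Fg q s = 1 - q * (1 - s) / D"
    using FgB[of q 1 s] q s unfolding D_def by simp (simp add: algebra_simps)
  define z where "z = 1 - Fg q s"
  have zD: "z * D = q * (1 - s)" unfolding z_def Fq using D by simp
  have z0: "0 \<le> z" unfolding z_def Fq using D q s by simp
  have Fq1: "Fg q s \<le> 1" using z0 unfolding z_def by simp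
  have rq: "0 \<le> r * (1 - q)" using r q by simp
  have "Fg (q / (q + r * (1 - q))) (Fg q s) = 1 - q * z / (r * (1 - q) * z + q)"
    using FgB[of q "q + r * (1 - q)" "Fg q s"] q rq Fq1 unfolding z_def by simp
  also have "\<dots> = 1 - q * (1 - s) / (r * (1 - q) * (1 - s) + D)"
  proof -
    have p1: "0 < r * (1 - q) * z + q" using rq z0 q by (simp add: add_nonneg_pos mult_nonneg_nonneg)
    have p2: "0 < r * (1 - q) * (1 - s) + D" using D rq s by (simp add: add_nonneg_pos mult_nonneg_nonneg)
    have "q * z * (r * (1 - q) * (1 - s) + D) = q * z * (r * (1 - q) * (1 - s)) + q * (z * D)"
      by (simp add: algebra_simps)
    also have "\<dots> = q * (1 - s) * (r * (1 - q) * z + q)" unfolding zD by (simp add: algebra_simps)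
    finally have "q * z / (r * (1 - q) * z + q) = q * (1 - s) / (r * (1 - q) * (1 - s) + D)"
      using p1 p2 by (simp add: frac_eq_eq)
    then show ?thesis by simp
  qed
  also have "\<dots> = 1 - q * (1 - s) / ((r + 1) * (1 - q) * (1 - s) + q)"
    unfolding D_def by (simp add: algebra_simps)
  also have "\<dots> = Fg (q / (q + (r+1) * (1 - q))) s"
    using FgB[of q "q + (r+1) * (1 - q)" s] q s r by simp
  finally show ?thesis .
qed
lemma Fg_comp:
  assumes q: "0 < q" "q < 1" and s: "0 \<le> s" "s \<le> 1"
  shows "Fg (bet q m) (Fg q s) = Fg (bet q (Suc m)) s"
  using Fg_comp_r[OF q s, of "real m"] by (simp add: bet_def add.commute)


lemma Q_gf:
  assumes q: "0 < q" "q < 1"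
  shows "(\<forall>a. 0 \<le> Qk (geom_offspring q) m j a) \<and>
    (\<forall>s. 0 \<le> s \<longrightarrow> s \<le> 1 \<longrightarrow> (\<lambda>a. Qk (geom_offspring q) m j a * s^a) sums (Fg (bet q m) s)^j)"
proof (induction m)
  case 0
  have "(\<lambda>a. Qk (geom_offspring q) 0 j a * s^a) sums (Fg (bet q 0) s)^j" for s
  proof -
    have "(\<lambda>a. Qk (geom_offspring q) 0 j a * s^a) = (\<lambda>a. if a = j then s^a else 0)" by auto
    moreover have "Fg (bet q 0) s = s" using q by (simp add: bet_0 Fg_def)
    ultimately show ?thesis using sums_single[of j "\<lambda>a. s^a"] by simp
  qed
  then show ?case by simp
next
  case (Suc m)
  let ?p = "geom_offspring q"
  have Qnn: "0 \<le> Qk ?p m j b" for b using Suc by blast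
  have pnn: "0 \<le> ?p c" for c using q by (simp add: geom_nonneg)
  have key: "summable (\<lambda>b. Qk ?p m j b * convp ?p b a * s^a) \<and>
      (\<lambda>a. \<Sum>b. Qk ?p m j b * convp ?p b a * s^a) sums (Fg (bet q (Suc m)) s)^j"
    if s: "0 \<le> s" "s \<le> 1" for s a
  proof -
    have inner: "(\<lambda>a. Qk ?p m j b * convp ?p b a * s^a) sums (Qk ?p m j b * (Fg q s)^b)" for b
    proof -
      have "(\<lambda>a. convp ?p b a * s^a) sums (Fg q s)^b"
        by (rule convp_sums[OF pnn s(1) geom_sums]) (use q s in auto)
      from sums_mult[OF this, of "Qk ?p m j b"] show ?thesis by (simp add: mult.assoc)
    qed
    have F01: "0 \<le> Fg q s" "Fg q s \<le> 1" using Fg_range[of q s] q s by auto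
    have outer: "(\<lambda>b. Qk ?p m j b * (Fg q s)^b) sums (Fg (bet q m) (Fg q s))^j"
      using Suc F01 by blast
    have nn: "0 \<le> Qk ?p m j b * convp ?p b a * s^a" for a b
      using Qnn convp_nonneg[OF pnn] s by simp
    from nonneg_swap_sums[OF nn inner outer]
    show ?thesis using Fg_comp[OF q s] by simp
  qed
  have sm: "summable (\<lambda>b. Qk ?p m j b * convp ?p b a)" for a
    using key[of 1 a] by simp
  show ?case
  proof (intro conjI allI impI)
    fix a show "0 \<le> Qk ?p (Suc m) j a"
      using sm[of a] Qnn convp_nonneg[OF pnn] by (simp add: suminf_nonneg)
  next
    fix s :: real assume s: "0 \<le> s" "s \<le> 1"
    have "(\<Sum>b. Qk ?p m j b * convp ?p b a * s^a) = Qk ?p (Suc m) j a * s^a" for a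
      using suminf_mult2[OF sm[of a], of "s^a"] by simp
    then show "(\<lambda>a. Qk ?p (Suc m) j a * s^a) sums (Fg (bet q (Suc m)) s)^j"
      using key[OF s] by simp
  qed
qed

lemma Q_eq:
  assumes q: "0 < q" "q < 1"
  shows "Qk (geom_offspring q) m j a = convp (geom_offspring (bet q m)) j a"
proof -
  define c where "c a = Qk (geom_offspring q) m j a - convp (geom_offspring (bet q m)) j a" for a
  have b: "0 < bet q m" "bet q m \<le> 1" using bet_pos bet_le1 q by auto
  have cs: "(\<lambda>a. c a * s^a) sums 0" if s: "0 \<le> s" "s < 1" for s
  proof -
    have 1: "(\<lambda>a. Qk (geom_offspring q) m j a * s^a) sums (Fg (bet q m) s)^j"
      using Q_gf[OF q] s by auto
    have 2: "(\<lambda>a. convp (geom_offspring (bet q m)) j a * s^a) sums (Fg (bet q m) s)^j"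
      by (rule convp_sums[OF _ s(1) geom_sums]) (use b s in \<open>auto simp: geom_nonneg\<close>)
    show ?thesis using sums_diff[OF 1 2] by (simp add: c_def algebra_simps)
  qed
  have "c a = 0"
    by (rule powser_unique_aux) (use cs in \<open>auto simp: sums_iff\<close>)
  then show ?thesis by (simp add: c_def)
qed

lemma geom_mult:
  assumes "1 \<le> c" "1 \<le> d"
  shows "geom_offspring \<beta> c * geom_offspring \<beta> d * (1 - \<beta>) = \<beta>^2 * geom_offspring \<beta> (c + d)"
proof -
  obtain c' d' where "c = Suc c'" "d = Suc d'" using assms by (metis Suc_le_D One_nat_def)
  then show ?thesis by (simp add: geom_offspring_def power_add power2_eq_square mult_ac)
qed

lemma conv_lower:
  assumes b: "0 < \<beta>" "\<beta> < 1" and a: "1 \<le> a"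
  shows "real j * (1 - \<beta>)^(j - 1) * geom_offspring \<beta> a \<le> convp (geom_offspring \<beta>) j a"
proof (induction j)
  case 0
  then show ?case using convp_nonneg[of "geom_offspring \<beta>"] b by (simp add: geom_nonneg)
next
  case (Suc j)
  let ?g = "geom_offspring \<beta>"
  let ?x = "1 - \<beta>"
  have gnn: "0 \<le> ?g c" for c using b by (simp add: geom_nonneg)
  have "(\<Sum>c\<in>{0, a}. ?g c * convp ?g j (a - c)) \<le> (\<Sum>c\<le>a. ?g c * convp ?g j (a - c))"
    by (rule sum_mono2) (auto intro!: mult_nonneg_nonneg gnn convp_nonneg)
  moreover have "(\<Sum>c\<in>{0, a}. ?g c * convp ?g j (a - c)) = ?x * convp ?g j a + ?g a * ?x^j"
    using a by (simp add: convp_zero geom_offspring_def)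
  moreover have "?x * (real j * ?x^(j - 1) * ?g a) \<le> ?x * convp ?g j a"
    using Suc b by (intro mult_left_mono) auto
  moreover have "?x * (real j * ?x^(j - 1) * ?g a) = real j * ?x^j * ?g a" by (cases j) auto
  moreover have "real (Suc j) * ?x^(Suc j - 1) * ?g a = real j * ?x^j * ?g a + ?g a * ?x^j"
    by (simp add: algebra_simps)
  moreover have "convp ?g (Suc j) a = (\<Sum>c\<le>a. ?g c * convp ?g j (a - c))" by simp
  ultimately show ?case by linarith
qed

lemma conv_upper:
  assumes b: "0 < \<beta>" "\<beta> < 1"
  shows "1 \<le> a \<Longrightarrow> real a * \<beta>^2 \<le> 1 - \<beta> \<Longrightarrow>
    convp (geom_offspring \<beta>) j a \<le> (real j + 4^j * (real a * \<beta>^2 / (1 - \<beta>))) * geom_offspring \<beta> a"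
proof (induction j arbitrary: a)
  case 0
  then show ?case using b by (simp add: geom_nonneg)
next
  case (Suc j)
  let ?g = "geom_offspring \<beta>"
  define x where "x = 1 - \<beta>"
  define D :: real where "D = 4^j"
  define e where "e = real a * \<beta>^2 / x"
  have x: "0 < x" "x \<le> 1" using b by (auto simp: x_def)
  have gnn: "0 \<le> ?g c" for c using b by (simp add: geom_nonneg)
  have a: "1 \<le> a" using Suc by simp
  have e0: "0 \<le> e" using x by (simp add: e_def)
  have e1: "e \<le> 1" using Suc x unfolding e_def x_def by simp
  have D0: "0 \<le> D" by (simp add: D_def)
  have jD: "real j \<le> D"
  proof -
    have "j < 2^j" by (rule less_exp)
    also have "(2::nat)^j \<le> 4^j" by (simp add: power_mono)
    finally show ?thesis unfolding D_def by (metis less_imp_le of_nat_le_iff of_nat_numeral of_nat_power)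
  qed
  have IH: "convp ?g j d \<le> (real j + D * e) * ?g d" if d: "1 \<le> d" "d \<le> a" for d
  proof -
    have "real d * \<beta>^2 \<le> real a * \<beta>^2" using d by (simp add: mult_right_mono)
    then have "real d * \<beta>^2 \<le> 1 - \<beta>" using Suc by simp
    then have "convp ?g j d \<le> (real j + 4^j * (real d * \<beta>^2 / (1 - \<beta>))) * ?g d"
      using Suc.IH d by simp
    also have "\<dots> \<le> (real j + D * e) * ?g d"
    proof (intro mult_right_mono gnn add_left_mono)
      have "real d * \<beta>^2 / (1 - \<beta>) \<le> e" unfolding e_def x_def
        using x \<open>real d * \<beta>^2 \<le> real a * \<beta>^2\<close> by (simp add: divide_right_mono x_def)
      from mult_left_mono[OF this, of "4^j"]
      show "4 ^ j * (real d * \<beta>\<^sup>2 / (1 - \<beta>)) \<le> D * e" unfolding D_def by simp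
    qed
    finally show ?thesis .
  qed
  have split: "{..a} = insert 0 (insert a {1..<a})" using a by auto
  have "convp ?g (Suc j) a = ?g 0 * convp ?g j a + (?g a * convp ?g j 0 + (\<Sum>c\<in>{1..<a}. ?g c * convp ?g j (a - c)))"
    using a by (simp add: split)
  also have "\<dots> = x * convp ?g j a + (?g a * x^j + (\<Sum>c\<in>{1..<a}. ?g c * convp ?g j (a - c)))"
    by (simp add: convp_zero geom_offspring_def x_def)
  finally have eq: "convp ?g (Suc j) a = x * convp ?g j a + (?g a * x^j + (\<Sum>c\<in>{1..<a}. ?g c * convp ?g j (a - c)))" .
  have T1: "x * convp ?g j a \<le> (real j + D * e) * ?g a"
  proof -
    have "x * convp ?g j a \<le> 1 * convp ?g j a" using x convp_nonneg[of ?g] gnn by (intro mult_right_mono) auto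
    also have "\<dots> \<le> (real j + D * e) * ?g a" using IH[of a] a by simp
    finally show ?thesis .
  qed
  have T2: "?g a * x^j \<le> ?g a" using x gnn by (simp add: mult_left_le power_le_one)
  have T3: "(\<Sum>c\<in>{1..<a}. ?g c * convp ?g j (a - c)) \<le> (real j + D * e) * e * ?g a"
  proof -
    have "(\<Sum>c\<in>{1..<a}. ?g c * convp ?g j (a - c)) \<le> (\<Sum>c\<in>{1..<a}. (real j + D * e) * (\<beta>^2 * ?g a / x))"
    proof (intro sum_mono)
      fix c assume c: "c \<in> {1..<a}"
      have "?g c * convp ?g j (a - c) \<le> ?g c * ((real j + D * e) * ?g (a - c))"
        using IH[of "a - c"] c gnn by (intro mult_left_mono) auto
      also have "?g c * ?g (a - c) = \<beta>^2 * ?g a / x"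
      proof -
        have ca: "c + (a - c) = a" using c by simp
        have "?g c * ?g (a - c) * x = \<beta>^2 * ?g a"
          using geom_mult[of c "a - c" \<beta>] c unfolding x_def ca by force
        then show ?thesis using x by (simp add: eq_divide_eq)
      qed
      then have "?g c * ((real j + D * e) * ?g (a - c)) = (real j + D * e) * (\<beta>^2 * ?g a / x)"
        by (metis mult.left_commute)
      finally show "?g c * convp ?g j (a - c) \<le> (real j + D * e) * (\<beta>^2 * ?g a / x)" .
    qed
    also have "\<dots> = real (a - 1) * ((real j + D * e) * (\<beta>^2 * ?g a / x))" by simp
    also have "\<dots> \<le> real a * ((real j + D * e) * (\<beta>^2 * ?g a / x))"
      using x gnn e0 D0 by (intro mult_right_mono) auto
    also have "\<dots> = (real j + D * e) * e * ?g a" by (simp add: e_def)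
    finally show ?thesis .
  qed
  have fin: "(real j + D * e) * ?g a + ?g a + (real j + D * e) * e * ?g a \<le> (real (Suc j) + 4 * D * e) * ?g a"
  proof -
    have "real j * e \<le> D * e" using jD e0 by (rule mult_right_mono)
    moreover have "D * (e * e) \<le> D * e" using D0 e0 e1 by (intro mult_left_mono) (auto simp: mult_left_le)
    ultimately have "D * e + real j * e + D * e * e \<le> 4 * D * e" using D0 e0 by (simp add: mult.assoc) (smt (verit) mult_nonneg_nonneg)
    then have "?g a * (D * e + real j * e + D * e * e) \<le> ?g a * (4 * D * e)" by (rule mult_left_mono) (rule gnn)
    then show ?thesis by (simp add: algebra_simps)
  qed
  have "convp ?g (Suc j) a \<le> (real (Suc j) + 4 * D * e) * ?g a"
    using eq T1 T2 T3 fin by linarith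
  then show ?case by (simp add: D_def e_def x_def mult.assoc)
qed


lemma bet_mono: "0 < q \<Longrightarrow> q < 1 \<Longrightarrow> m1 \<le> m2 \<Longrightarrow> bet q m2 \<le> bet q m1"
  unfolding bet_def
  by (intro divide_left_mono) (auto intro!: mult_right_mono add_pos_nonneg mult_pos_pos)

lemma bet_lt1: "0 < q \<Longrightarrow> q < 1 \<Longrightarrow> 1 \<le> m \<Longrightarrow> bet q m < 1"
  unfolding bet_def by (subst divide_less_eq_1_pos) (auto intro: add_pos_nonneg)

lemma geom_pos: "0 < \<beta> \<Longrightarrow> \<beta> < 1 \<Longrightarrow> 0 < geom_offspring \<beta> a"
  by (auto simp: geom_offspring_def)

lemma ratio_lim:
  fixes q :: real and \<alpha> :: "nat \<Rightarrow> nat" and h j :: nat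
  assumes q: "0 < q" "q < 1" and \<alpha>: "\<forall>n. \<alpha> n > 0"
    and lim: "(\<lambda>n. real (\<alpha> n) / real n ^ 2) \<longlonglongrightarrow> 0"
  shows "(\<lambda>n. convp (geom_offspring (bet q (n - h))) j (\<alpha> n) / geom_offspring (bet q n) (\<alpha> n)) \<longlonglongrightarrow> real j"
proof -
  define b where "b n = bet q (n - h)" for n
  define c where "c n = bet q n" for n
  have evh: "eventually (\<lambda>n. h < n) sequentially" by (rule eventually_gt_at_top)
  have bform: "eventually (\<lambda>n. b n = q / (q + (real n - real h) * (1 - q))) sequentially"
    using evh by eventually_elim (simp add: b_def bet_def of_nat_diff)
  have cform: "c n = q / (q + real n * (1 - q))" for n by (simp add: c_def bet_def)
  have b0: "b \<longlonglongrightarrow> 0"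
  proof -
    have "(\<lambda>n::nat. q / (q + (real n - real h) * (1 - q))) \<longlonglongrightarrow> 0" using q by real_asymp
    then show ?thesis by (rule Lim_transform_eventually) (rule eventually_mono[OF bform], simp)
  qed
  have c0: "c \<longlonglongrightarrow> 0" unfolding cform using q by real_asymp
  have ev0: "eventually (\<lambda>n. 0 < n) sequentially" by (rule eventually_gt_at_top)
  have ab2: "(\<lambda>n. real (\<alpha> n) * b n ^ 2) \<longlonglongrightarrow> 0"
  proof -
    have l: "(\<lambda>n::nat. (real n)^2 * (q / (q + (real n - real h) * (1 - q)))^2) \<longlonglongrightarrow> (q * inverse (1 - q))\<^sup>2"
      using q by real_asymp
    have "(\<lambda>n. (real (\<alpha> n) / real n ^ 2) * ((real n)^2 * (q / (q + (real n - real h) * (1 - q)))^2)) \<longlonglongrightarrow> 0 * (q * inverse (1 - q))\<^sup>2"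
      by (rule tendsto_mult[OF lim l])
    moreover have "eventually (\<lambda>n. (real (\<alpha> n) / real n ^ 2) * ((real n)^2 * (q / (q + (real n - real h) * (1 - q)))^2) = real (\<alpha> n) * b n ^ 2) sequentially"
      using bform ev0 by eventually_elim simp
    ultimately show ?thesis by (simp add: Lim_transform_eventually)
  qed
  have abc: "(\<lambda>n. real (\<alpha> n) * (b n - c n)) \<longlonglongrightarrow> 0"
  proof -
    have l: "(\<lambda>n::nat. (real n)^2 * (q / (q + (real n - real h) * (1 - q)) - q / (q + real n * (1 - q)))) \<longlonglongrightarrow>
      q * (inverse (1 - q) * (inverse (1 - q) * q)) - q * (inverse (1 - q) * (inverse (1 - q) * (q - real h * (1 - q))))"
      using q by real_asymp
    have "(\<lambda>n. (real (\<alpha> n) / real n ^ 2) * ((real n)^2 * (q / (q + (real n - real h) * (1 - q)) - q / (q + real n * (1 - q))))) \<longlonglongrightarrow>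
      0 * (q * (inverse (1 - q) * (inverse (1 - q) * q)) - q * (inverse (1 - q) * (inverse (1 - q) * (q - real h * (1 - q)))))"
      by (rule tendsto_mult[OF lim l])
    moreover have "eventually (\<lambda>n. (real (\<alpha> n) / real n ^ 2) * ((real n)^2 * (q / (q + (real n - real h) * (1 - q)) - q / (q + real n * (1 - q)))) = real (\<alpha> n) * (b n - c n)) sequentially"
      using bform ev0 by eventually_elim (simp add: cform)
    ultimately show ?thesis by (simp add: Lim_transform_eventually)
  qed
  have bc1: "(\<lambda>n. b n / c n) \<longlonglongrightarrow> 1"
  proof -
    have l: "(\<lambda>n::nat. (q / (q + (real n - real h) * (1 - q))) / (q / (q + real n * (1 - q)))) \<longlonglongrightarrow> q * inverse (1 - q) * (inverse q * (1 - q))"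
      using q by real_asymp
    moreover have "q * inverse (1 - q) * (inverse q * (1 - q)) = 1" using q by (simp add: field_simps)
    moreover have "eventually (\<lambda>n. (q / (q + (real n - real h) * (1 - q))) / (q / (q + real n * (1 - q))) = b n / c n) sequentially"
      using bform by eventually_elim (simp add: cform)
    ultimately show ?thesis by (simp add: Lim_transform_eventually)
  qed
  define R where "R n = geom_offspring (b n) (\<alpha> n) / geom_offspring (c n) (\<alpha> n)" for n
  have props: "eventually (\<lambda>n. 0 < c n \<and> c n < 1 \<and> c n \<le> b n \<and> 0 < b n \<and> b n < 1) sequentially"
    using evh by eventually_elim (use q in \<open>auto simp: b_def c_def bet_pos bet_lt1 bet_mono\<close>)
  have R1: "R \<longlonglongrightarrow> 1"
  proof (rule tendsto_sandwich[of "\<lambda>n. (b n / c n)^2 * (1 - real (\<alpha> n) * (b n - c n) / (1 - c n))" _ _ "\<lambda>n. (b n / c n)^2"])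
    have bnd: "(b n / c n)^2 * (1 - real (\<alpha> n) * (b n - c n) / (1 - c n)) \<le> R n \<and> R n \<le> (b n / c n)^2"
      if p: "0 < c n \<and> c n < 1 \<and> c n \<le> b n \<and> 0 < b n \<and> b n < 1" for n
    proof -
      define y where "y = (1 - b n) / (1 - c n)"
      have y01: "0 \<le> y" "y \<le> 1" using p by (auto simp: y_def)
      have a1: "1 \<le> \<alpha> n" using \<alpha> by (simp add: Suc_le_eq)
      have Req: "R n = (b n / c n)^2 * y ^ (\<alpha> n - 1)"
        using a1 p by (simp add: R_def geom_offspring_def y_def power_divide)
      have u: "R n \<le> (b n / c n)^2" unfolding Req using y01
        by (simp add: mult_left_le power_le_one)
      have "-1 \<le> y - 1" using y01 by simp
      from Bernoulli_inequality[OF this, of "\<alpha> n - 1"]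
      have "1 + real (\<alpha> n - 1) * (y - 1) \<le> y ^ (\<alpha> n - 1)" by simp
      moreover have "y - 1 = - ((b n - c n) / (1 - c n))" using p by (simp add: y_def field_simps)
      moreover have "real (\<alpha> n - 1) * ((b n - c n) / (1 - c n)) \<le> real (\<alpha> n) * ((b n - c n) / (1 - c n))"
        using p by (intro mult_right_mono) auto
      ultimately have "1 - real (\<alpha> n) * (b n - c n) / (1 - c n) \<le> y ^ (\<alpha> n - 1)" by simp
      then have "(b n / c n)^2 * (1 - real (\<alpha> n) * (b n - c n) / (1 - c n)) \<le> R n"
        unfolding Req by (intro mult_left_mono) auto
      then show ?thesis using u by simp
    qed
    show "eventually (\<lambda>n. (b n / c n)^2 * (1 - real (\<alpha> n) * (b n - c n) / (1 - c n)) \<le> R n) sequentially"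
      using props by (rule eventually_mono) (use bnd in blast)
    show "eventually (\<lambda>n. R n \<le> (b n / c n)^2) sequentially"
      using props by (rule eventually_mono) (use bnd in blast)

    have "(\<lambda>n. real (\<alpha> n) * (b n - c n) / (1 - c n)) \<longlonglongrightarrow> 0 / (1 - 0)"
      using abc c0 by (intro tendsto_divide tendsto_diff) auto
    then have "(\<lambda>n. real (\<alpha> n) * (b n - c n) / (1 - c n)) \<longlonglongrightarrow> 0" by simp
    from tendsto_mult[OF tendsto_power[OF bc1, of 2] tendsto_diff[OF tendsto_const this, of 1]]
    show "(\<lambda>n. (b n / c n)^2 * (1 - real (\<alpha> n) * (b n - c n) / (1 - c n))) \<longlonglongrightarrow> 1"
      by simp
    show "(\<lambda>n. (b n / c n)^2) \<longlonglongrightarrow> 1" using tendsto_power[OF bc1, of 2] by simp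
  qed
  have small: "eventually (\<lambda>n. real (\<alpha> n) * b n ^ 2 \<le> 1 - b n) sequentially"
  proof -
    have "(\<lambda>n. 1 - b n - real (\<alpha> n) * b n ^ 2) \<longlonglongrightarrow> 1 - 0 - 0"
      using b0 ab2 by (intro tendsto_diff) auto
    then have "eventually (\<lambda>n. 1 - b n - real (\<alpha> n) * b n ^ 2 > 0) sequentially"
      by (rule order_tendstoD) simp
    then show ?thesis by eventually_elim simp
  qed
  show ?thesis
  proof (rule tendsto_sandwich[of "\<lambda>n. real j * (1 - b n)^(j - 1) * R n" _ _
        "\<lambda>n. (real j + 4^j * (real (\<alpha> n) * b n ^ 2 / (1 - b n))) * R n"])
    have bnd: "(real j * (1 - b n)^(j - 1) * R n \<le>
        convp (geom_offspring (bet q (n - h))) j (\<alpha> n) / geom_offspring (bet q n) (\<alpha> n)) \<and> (convp (geom_offspring (bet q (n - h))) j (\<alpha> n) / geom_offspring (bet q n) (\<alpha> n)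
         \<le> (real j + 4^j * (real (\<alpha> n) * b n ^ 2 / (1 - b n))) * R n)"
      if p: "0 < c n \<and> c n < 1 \<and> c n \<le> b n \<and> 0 < b n \<and> b n < 1"
        and sm: "real (\<alpha> n) * b n ^ 2 \<le> 1 - b n" for n
    proof -
      have a1: "1 \<le> \<alpha> n" using \<alpha> by (simp add: Suc_le_eq)
      have bc_eq: "bet q (n - h) = b n" "bet q n = c n" by (simp_all add: b_def c_def)
      have gc: "0 < geom_offspring (c n) (\<alpha> n)" using p geom_pos by auto
      have lo: "real j * (1 - b n)^(j - 1) * geom_offspring (b n) (\<alpha> n) \<le> convp (geom_offspring (b n)) j (\<alpha> n)"
        using conv_lower[of "b n" "\<alpha> n" j] p a1 by auto
      have up: "convp (geom_offspring (b n)) j (\<alpha> n) \<le> (real j + 4^j * (real (\<alpha> n) * b n ^ 2 / (1 - b n))) * geom_offspring (b n) (\<alpha> n)"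
        using conv_upper[of "b n" "\<alpha> n" j] p a1 sm by auto
      have l: "real j * (1 - b n)^(j - 1) * R n \<le>
        convp (geom_offspring (bet q (n - h))) j (\<alpha> n) / geom_offspring (bet q n) (\<alpha> n)"
        using divide_right_mono[OF lo, of "geom_offspring (c n) (\<alpha> n)"] gc
        unfolding R_def bc_eq by (simp add: mult.assoc)
      have u: "convp (geom_offspring (bet q (n - h))) j (\<alpha> n) / geom_offspring (bet q n) (\<alpha> n)
         \<le> (real j + 4^j * (real (\<alpha> n) * b n ^ 2 / (1 - b n))) * R n"
        using divide_right_mono[OF up, of "geom_offspring (c n) (\<alpha> n)"] gc
        unfolding R_def bc_eq by (simp add: mult.assoc)
      show ?thesis using l u by simp
    qed
    show "eventually (\<lambda>n. real j * (1 - b n)^(j - 1) * R n \<le>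
        convp (geom_offspring (bet q (n - h))) j (\<alpha> n) / geom_offspring (bet q n) (\<alpha> n)) sequentially"
      using props small by eventually_elim (use bnd in blast)
    show "eventually (\<lambda>n. convp (geom_offspring (bet q (n - h))) j (\<alpha> n) / geom_offspring (bet q n) (\<alpha> n)
         \<le> (real j + 4^j * (real (\<alpha> n) * b n ^ 2 / (1 - b n))) * R n) sequentially"
      using props small by eventually_elim (use bnd in blast)
    have x1: "(\<lambda>n. 1 - b n) \<longlonglongrightarrow> 1" using tendsto_diff[OF tendsto_const b0, of 1] by simp
    from tendsto_mult[OF tendsto_mult[OF tendsto_const tendsto_power[OF x1, of "j - 1"]] R1, of "real j"]
    show "(\<lambda>n. real j * (1 - b n)^(j - 1) * R n) \<longlonglongrightarrow> real j" by simp
    have "(\<lambda>n. real (\<alpha> n) * b n ^ 2 / (1 - b n)) \<longlonglongrightarrow> 0 / 1"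
      by (rule tendsto_divide[OF ab2 x1]) simp
    from tendsto_mult[OF tendsto_add[OF tendsto_const tendsto_mult[OF tendsto_const this]] R1, of "real j" "4^j"]
    show "(\<lambda>n. (real j + 4^j * (real (\<alpha> n) * b n ^ 2 / (1 - b n))) * R n) \<longlonglongrightarrow> real j"
      by simp
  qed
qed

definition lev :: "tree \<Rightarrow> nat \<Rightarrow> nat list set" where
  "lev t n = {u\<in>t. length u = n}"

definition ext :: "tree \<Rightarrow> nat \<Rightarrow> (nat list \<Rightarrow> nat) \<Rightarrow> tree" where
  "ext t n c = t \<union> {u @ [i] | u i. u \<in> t \<and> length u = n \<and> 1 \<le> i \<and> i \<le> c u}"

lemma tree_root: "is_tree t \<Longrightarrow> [] \<in> t" unfolding is_tree_def by (elim conjE)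

lemma tree_prefix: "is_tree t \<Longrightarrow> u @ v \<in> t \<Longrightarrow> u \<in> t"
proof -
  assume t: "is_tree t" and uv: "u @ v \<in> t"
  have "\<forall>u v. u @ v \<in> t \<longrightarrow> u \<in> t" using t unfolding is_tree_def by (elim conjE)
  then show "u \<in> t" using uv by (elim allE[of _ u] allE[of _ v]) (rule mp)
qed

lemma tree_kids_ex: "is_tree t \<Longrightarrow> u \<in> t \<Longrightarrow> \<exists>k. \<forall>i. u @ [i] \<in> t \<longleftrightarrow> 1 \<le> i \<and> i \<le> k"
proof -
  assume t: "is_tree t" and u: "u \<in> t"
  have "\<forall>u\<in>t. \<exists>k. \<forall>i. u @ [i] \<in> t \<longleftrightarrow> 1 \<le> i \<and> i \<le> k" using t unfolding is_tree_def by (elim conjE)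
  then show ?thesis using u by (rule bspec)
qed

lemma tree_kids_set: "is_tree t \<Longrightarrow> u \<in> t \<Longrightarrow> {i. u @ [i] \<in> t} = {1..kids t u}"
proof -
  assume t: "is_tree t" and u: "u \<in> t"
  obtain k where k: "\<forall>i. u @ [i] \<in> t \<longleftrightarrow> 1 \<le> i \<and> i \<le> k" using tree_kids_ex[OF t u] by blast
  then have e: "{i. u @ [i] \<in> t} = {1..k}" by (simp add: set_eq_iff)
  then have "kids t u = k" by (simp add: kids_def)
  then show ?thesis using e by simp
qed

lemma tree_child: "is_tree t \<Longrightarrow> u \<in> t \<Longrightarrow> u @ [i] \<in> t \<longleftrightarrow> 1 \<le> i \<and> i \<le> kids t u"
proof -
  assume t: "is_tree t" and u: "u \<in> t"
  have "(i \<in> {i. u @ [i] \<in> t}) = (i \<in> {1..kids t u})" using tree_kids_set[OF t u] by (rule arg_cong)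
  then show ?thesis by simp
qed

lemma tree_child': "is_tree t \<Longrightarrow> u @ [i] \<in> t \<Longrightarrow> 1 \<le> i \<and> i \<le> kids t u"
proof -
  assume t: "is_tree t" and ui: "u @ [i] \<in> t"
  have "u \<in> t" using tree_prefix[OF t ui] .
  then show ?thesis using tree_child[OF t, of u i] ui by simp
qed

lemma snoc_split: "w \<noteq> [] \<Longrightarrow> w = butlast w @ [last w]" by simp

lemma tree_finite_level: "is_tree t \<Longrightarrow> finite {u\<in>t. length u \<le> n}"
proof (induction n)
  case 0
  have "{u\<in>t. length u \<le> 0} \<subseteq> {[]}" by auto
  then show ?case by (rule finite_subset) simp
next
  case (Suc n)
  have "{u\<in>t. length u \<le> Suc n} \<subseteq> {u\<in>t. length u \<le> n} \<union>
      (\<Union>u\<in>{u\<in>t. length u \<le> n}. (\<lambda>i. u @ [i]) ` {1..kids t u})"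
  proof
    fix w assume w: "w \<in> {u\<in>t. length u \<le> Suc n}"
    show "w \<in> {u\<in>t. length u \<le> n} \<union> (\<Union>u\<in>{u\<in>t. length u \<le> n}. (\<lambda>i. u @ [i]) ` {1..kids t u})"
    proof (cases "length w \<le> n")
      case True then show ?thesis using w by auto
    next
      case False
      then have ne: "w \<noteq> []" by auto
      have wt: "butlast w @ [last w] \<in> t" using w snoc_split[OF ne] by auto
      then have "butlast w \<in> t" using tree_prefix Suc.prems by blast
      moreover have "last w \<in> {1..kids t (butlast w)}" using tree_child'[OF Suc.prems wt] by auto
      moreover have "length (butlast w) \<le> n" using w by auto
      ultimately show ?thesis using snoc_split[OF ne] by blast
    qed
  qed
  moreover have "finite (\<Union>u\<in>{u\<in>t. length u \<le> n}. (\<lambda>i. u @ [i]) ` {1..kids t u})"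
    using Suc by auto
  ultimately show ?case using Suc by (meson finite_UnI finite_subset)
qed

lemma tree_finite: "is_tree t \<Longrightarrow> height_le h t \<Longrightarrow> finite t"
proof -
  assume "is_tree t" "height_le h t"
  then have "t \<subseteq> {u\<in>t. length u \<le> h}" by (auto simp: height_le_def)
  then show "finite t" using tree_finite_level[OF \<open>is_tree t\<close>, of h] by (rule finite_subset)
qed

lemma is_treeI:
  assumes "[] \<in> t" and "\<And>u v. u @ v \<in> t \<Longrightarrow> u \<in> t"
    and "\<And>u. u \<in> t \<Longrightarrow> \<exists>k. \<forall>i. u @ [i] \<in> t \<longleftrightarrow> 1 \<le> i \<and> i \<le> k"
  shows "is_tree t"
  unfolding is_tree_def
proof (intro conjI allI impI ballI)
  show "[] \<in> t" by fact
next
  fix u v assume "u @ v \<in> t" then show "u \<in> t" by (rule assms(2))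
next
  fix u assume "u \<in> t" then show "\<exists>k. \<forall>i. u @ [i] \<in> t \<longleftrightarrow> 1 \<le> i \<and> i \<le> k" by (rule assms(3))
qed

lemma restr_tree: "is_tree t \<Longrightarrow> is_tree (restr h t)"
proof (rule is_treeI)
  assume t: "is_tree t"
  show "[] \<in> restr h t" using tree_root[OF t] by (simp add: restr_def)
  fix u v assume "u @ v \<in> restr h t"
  then show "u \<in> restr h t" using tree_prefix[OF t, of u v] by (simp add: restr_def)
next
  fix u assume t: "is_tree t" and u: "u \<in> restr h t"
  show "\<exists>k. \<forall>i. (u @ [i] \<in> restr h t) = (1 \<le> i \<and> i \<le> k)"
  proof (cases "length u < h")
    case True
    obtain k where "\<forall>i. (u @ [i] \<in> t) = (1 \<le> i \<and> i \<le> k)" using tree_kids_ex[OF t] u by (auto simp: restr_def)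
    then show ?thesis using True by (intro exI[of _ k]) (auto simp: restr_def)
  next
    case False
    then show ?thesis by (intro exI[of _ 0]) (auto simp: restr_def)
  qed
qed

lemma restr_height: "height_le h (restr h t)" by (simp add: height_le_def restr_def)

lemma restr_restr: "restr n (restr m t) = restr (min n m) t" by (auto simp: restr_def)

lemma gen_restr: "n \<le> h \<Longrightarrow> gen n (restr h t) = gen n t"
  unfolding gen_def restr_def by (rule arg_cong[where f=card]) auto

lemma restr_le_id: "height_le h t \<Longrightarrow> restr h t = t" by (auto simp: restr_def height_le_def)

lemma tree_height0: "is_tree t \<Longrightarrow> height_le 0 t \<Longrightarrow> t = {[]}"
  by (auto simp: height_le_def tree_root)

lemma restr0: "is_tree t \<Longrightarrow> restr 0 t = {[]}" by (auto simp: restr_def tree_root)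

lemma kids_restr: "is_tree t \<Longrightarrow> u \<in> t \<Longrightarrow> length u < h \<Longrightarrow> kids (restr h t) u = kids t u"
  unfolding kids_def restr_def by (rule arg_cong[where f=card]) auto

lemma ext_restr:
  assumes "height_le n t" shows "restr n (ext t n c) = t"
  using assms by (auto simp: restr_def ext_def height_le_def)

lemma ext_sub: "t \<subseteq> ext t n c" by (auto simp: ext_def)

lemma ext_height: "height_le n t \<Longrightarrow> height_le (Suc n) (ext t n c)"
  by (auto simp: height_le_def ext_def)

lemma append_eq_snoc:
  assumes "u @ v = w @ [i]" "v \<noteq> []"
  shows "\<exists>v'. v = v' @ [i] \<and> u @ v' = w"
proof -
  obtain v' x where v: "v = v' @ [x]" using assms(2) by (metis rev_exhaust)
  then show ?thesis using assms(1) by auto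
qed

lemma ext_tree:
  assumes t: "is_tree t" and h: "height_le n t"
  shows "is_tree (ext t n c)"
proof (rule is_treeI)
  show "[] \<in> ext t n c" using t by (simp add: ext_def tree_root)
next
  fix u v assume uv: "u @ v \<in> ext t n c"
  show "u \<in> ext t n c"
  proof (cases "u @ v \<in> t")
    case True then show ?thesis using tree_prefix[OF t True] ext_sub by blast
  next
    case False
    then obtain w i where w: "u @ v = w @ [i]" "w \<in> t" "length w = n" "1 \<le> i" "i \<le> c w"
      using uv by (auto simp: ext_def)
    show ?thesis
    proof (cases "v = []")
      case True then show ?thesis using uv by simp
    next
      case False
      then obtain v' where "u @ v' = w" using append_eq_snoc[OF w(1)] by blast
      then have "u \<in> t" using tree_prefix[OF t] w(2) by blast
      then show ?thesis using ext_sub by blast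
    qed
  qed
next
  fix u assume u: "u \<in> ext t n c"
  show "\<exists>k. \<forall>i. (u @ [i] \<in> ext t n c) = (1 \<le> i \<and> i \<le> k)"
  proof (cases "u \<in> t")
    case ut: True
    show ?thesis
    proof (cases "length u = n")
      case True
      have "u @ [i] \<notin> t" for i using h True by (auto simp: height_le_def)
      then show ?thesis using ut True by (intro exI[of _ "c u"]) (auto simp: ext_def)
    next
      case False
      have "u @ [i] \<in> ext t n c \<longleftrightarrow> u @ [i] \<in> t" for i using False by (auto simp: ext_def)
      then show ?thesis using tree_kids_ex[OF t ut] by simp
    qed
  next
    case False
    then have "length u = Suc n" using u by (auto simp: ext_def)
    then have "u @ [i] \<notin> ext t n c" for i using h by (auto simp: ext_def height_le_def)
    then show ?thesis by (intro exI[of _ 0]) auto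
  qed
qed

lemma ext_kids_lev:
  assumes h: "height_le n t" and u: "u \<in> lev t n"
  shows "kids (ext t n c) u = c u"
proof -
  have "u @ [i] \<notin> t" for i using h u by (auto simp: height_le_def lev_def)
  then have "{i. u @ [i] \<in> ext t n c} = {1..c u}" using u by (auto simp: ext_def lev_def)
  then show ?thesis by (simp add: kids_def)
qed

lemma ext_kids_low:
  assumes u: "u \<in> t" "length u < n"
  shows "kids (ext t n c) u = kids t u"
proof -
  have "{i. u @ [i] \<in> ext t n c} = {i. u @ [i] \<in> t}" using u by (auto simp: ext_def)
  then show ?thesis by (simp add: kids_def)
qed

lemma ext_lev:
  assumes h: "height_le n t"
  shows "lev (ext t n c) (Suc n) = (\<Union>u\<in>lev t n. (\<lambda>i. u @ [i]) ` {1..c u})"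
  using h by (auto simp: lev_def ext_def height_le_def)

lemma ext_gen:
  assumes t: "is_tree t" and h: "height_le n t"
  shows "gen (Suc n) (ext t n c) = (\<Sum>u\<in>lev t n. c u)"
proof -
  have fin: "finite (lev t n)" using tree_finite[OF t h] by (simp add: lev_def)
  have "gen (Suc n) (ext t n c) = card (lev (ext t n c) (Suc n))" by (simp add: gen_def lev_def)
  also have "\<dots> = card (\<Union>u\<in>lev t n. (\<lambda>i. u @ [i]) ` {1..c u})" using ext_lev[OF h] by simp
  also have "\<dots> = (\<Sum>u\<in>lev t n. card ((\<lambda>i. u @ [i]) ` {1..c u}))"
  proof (rule card_UN_disjoint[OF fin])
    show "\<forall>u\<in>lev t n. finite ((\<lambda>i. u @ [i]) ` {1..c u})" by simp
    show "\<forall>u\<in>lev t n. \<forall>v\<in>lev t n. u \<noteq> v \<longrightarrow> (\<lambda>i. u @ [i]) ` {1..c u} \<inter> (\<lambda>i. v @ [i]) ` {1..c v} = {}"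
    proof (intro ballI impI)
      fix u v :: "nat list" assume "u \<noteq> v"
      show "(\<lambda>i. u @ [i]) ` {1..c u} \<inter> (\<lambda>i. v @ [i]) ` {1..c v} = {}"
      proof (rule equals0I)
        fix w assume "w \<in> (\<lambda>i. u @ [i]) ` {1..c u} \<inter> (\<lambda>i. v @ [i]) ` {1..c v}"
        then obtain i j where "w = u @ [i]" "w = v @ [j]" by blast
        then have "u = v" by simp
        then show False using \<open>u \<noteq> v\<close> by simp
      qed
    qed
  qed
  also have "\<dots> = (\<Sum>u\<in>lev t n. c u)"
    by (intro sum.cong refl) (simp add: card_image inj_on_def)
  finally show ?thesis .
qed

lemma ext_onto:
  assumes t'': "is_tree t''" "height_le (Suc n) t''" and r: "restr n t'' = t"
  shows "t'' = ext t n (kids t'')"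
proof
  show "t'' \<subseteq> ext t n (kids t'')"
  proof
    fix w assume w: "w \<in> t''"
    show "w \<in> ext t n (kids t'')"
    proof (cases "length w \<le> n")
      case True then show ?thesis using w r by (auto simp: ext_def restr_def)
    next
      case False
      then have ne: "w \<noteq> []" and len: "length w = Suc n" using t''(2) w by (auto simp: height_le_def)
      have wt: "butlast w @ [last w] \<in> t''" using w snoc_split[OF ne] by auto
      have "butlast w \<in> t" using tree_prefix[OF t''(1) wt] r len by (auto simp: restr_def)
      moreover have "1 \<le> last w \<and> last w \<le> kids t'' (butlast w)" using tree_child'[OF t''(1) wt] .
      moreover have "length (butlast w) = n" using len by simp
      ultimately show ?thesis unfolding ext_def using snoc_split[OF ne] by blast
    qed
  qed
next
  show "ext t n (kids t'') \<subseteq> t''"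
  proof
    fix w assume "w \<in> ext t n (kids t'')"
    then have "w \<in> t \<or> (\<exists>u i. w = u @ [i] \<and> u \<in> t \<and> 1 \<le> i \<and> i \<le> kids t'' u)"
      unfolding ext_def by auto
    then show "w \<in> t''"
    proof
      assume "w \<in> t" then show ?thesis using r by (auto simp: restr_def)
    next
      assume "\<exists>u i. w = u @ [i] \<and> u \<in> t \<and> 1 \<le> i \<and> i \<le> kids t'' u"
      then obtain u i where 2: "w = u @ [i]" "u \<in> t" "1 \<le> i" "i \<le> kids t'' u" by blast
      have "u \<in> t''" using 2 r by (auto simp: restr_def)
      then show ?thesis using 2 tree_child[OF t''(1)] by blast
    qed
  qed
qed

lemma ext_cong: "(\<And>u. u \<in> lev t n \<Longrightarrow> c u = c' u) \<Longrightarrow> ext t n c = ext t n c'"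
  unfolding ext_def lev_def by auto

definition W :: "(nat \<Rightarrow> real) \<Rightarrow> nat \<Rightarrow> tree \<Rightarrow> real" where
  "W p n t = (\<Prod>u\<in>{u\<in>t. length u < n}. p (kids t u))"

lemma ext_W:
  assumes t: "is_tree t" and h: "height_le n t"
  shows "W p (Suc n) (ext t n c) = W p n t * (\<Prod>u\<in>lev t n. p (c u))"
proof -
  have fin: "finite t" using tree_finite[OF t h] .
  have e: "{u\<in>ext t n c. length u < Suc n} = {u\<in>t. length u < n} \<union> lev t n"
    using h by (auto simp: ext_def lev_def height_le_def)
  have "W p (Suc n) (ext t n c) = (\<Prod>u\<in>{u\<in>t. length u < n} \<union> lev t n. p (kids (ext t n c) u))"
    by (simp add: W_def e)
  also have "\<dots> = (\<Prod>u\<in>{u\<in>t. length u < n}. p (kids (ext t n c) u)) * (\<Prod>u\<in>lev t n. p (kids (ext t n c) u))"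
    by (rule prod.union_disjoint) (use fin in \<open>auto simp: lev_def\<close>)
  also have "\<dots> = W p n t * (\<Prod>u\<in>lev t n. p (c u))"
    unfolding W_def using h
    by (intro arg_cong2[where f="(*)"] prod.cong refl) (auto simp: ext_kids_low ext_kids_lev)
  finally show ?thesis .
qed

definition comps :: "nat list set \<Rightarrow> nat \<Rightarrow> (nat list \<Rightarrow> nat) set" where
  "comps L a = {c \<in> L \<rightarrow>\<^sub>E {..a}. sum c L = a}"

lemma comps_empty: "comps {} a = (if a = 0 then {\<lambda>_. undefined} else {})"
  by (auto simp: comps_def)

lemma comps_insert:
  assumes fin: "finite L" and x: "x \<notin> L"
  shows "comps (insert x L) a = (\<lambda>(k, c). c(x := k)) ` (SIGMA k:{..a}. comps L (a - k))"
proof (intro equalityI subsetI)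
  fix d assume d: "d \<in> comps (insert x L) a"
  then have dP: "d \<in> insert x L \<rightarrow>\<^sub>E {..a}" and ds: "sum d (insert x L) = a" by (auto simp: comps_def)
  have sL: "d x + sum d L = a" using ds fin x by simp
  define c where "c = d(x := undefined)"
  have cL: "c u = d u" if "u \<in> L" for u using that x by (auto simp: c_def)
  have sc: "sum c L = a - d x" using sL cL by (simp add: sum.cong[OF refl cL])
  have cP: "c \<in> L \<rightarrow>\<^sub>E {..a - d x}"
  proof (rule PiE_I)
    fix u assume u: "u \<in> L"
    have "d u \<le> sum d L" by (rule member_le_sum[OF u _ fin]) simp
    then show "c u \<in> {..a - d x}" using sL cL[OF u] by simp
  next
    fix u assume u: "u \<notin> L"
    show "c u = undefined"
    proof (cases "u = x")
      case True then show ?thesis by (simp add: c_def)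
    next
      case False then have "u \<notin> insert x L" using u by simp
      then show ?thesis using dP False by (simp add: c_def PiE_def extensional_def)
    qed
  qed
  have "d x \<le> a" using dP by (simp add: PiE_iff)
  moreover have "c \<in> comps L (a - d x)" using cP sc by (simp add: comps_def)
  moreover have "d = c(x := d x)" by (simp add: c_def)
  ultimately show "d \<in> (\<lambda>(k, c). c(x := k)) ` (SIGMA k:{..a}. comps L (a - k))"
    by (intro image_eqI[of _ _ "(d x, c)"]) auto
next
  fix d assume "d \<in> (\<lambda>(k, c). c(x := k)) ` (SIGMA k:{..a}. comps L (a - k))"
  then obtain k c where k: "k \<le> a" and c: "c \<in> comps L (a - k)" and d: "d = c(x := k)" by auto
  have cP: "c \<in> L \<rightarrow>\<^sub>E {..a - k}" and cs: "sum c L = a - k" using c by (auto simp: comps_def)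
  have "d \<in> insert x L \<rightarrow>\<^sub>E {..a}"
  proof (rule PiE_I)
    fix u assume u: "u \<in> insert x L"
    show "d u \<in> {..a}"
    proof (cases "u = x")
      case True then show ?thesis using k d by simp
    next
      case False then have "u \<in> L" using u by simp
      then have "c u \<le> a - k" using cP by (auto simp: PiE_iff)
      then show ?thesis using False d by simp
    qed
  next
    fix u assume u: "u \<notin> insert x L"
    then show "d u = undefined" using cP d by (auto simp: PiE_def extensional_def)
  qed
  moreover have "sum d (insert x L) = a"
  proof -
    have "sum d (insert x L) = d x + sum d L" using fin x by simp
    also have "sum d L = sum c L" using x d by (intro sum.cong) auto
    finally show ?thesis using cs k d by simp
  qed
  ultimately show "d \<in> comps (insert x L) a" by (simp add: comps_def)
qed

lemma comps_inj:
  assumes x: "x \<notin> L"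
  shows "inj_on (\<lambda>(k, c). c(x := k)) (SIGMA k:{..a}. comps L (a - k))"
proof (rule inj_onI)
  fix p1 p2 assume p1: "p1 \<in> (SIGMA k:{..a}. comps L (a - k))" and p2: "p2 \<in> (SIGMA k:{..a}. comps L (a - k))"
    and eq: "(\<lambda>(k, c). c(x := k)) p1 = (\<lambda>(k, c). c(x := k)) p2"
  obtain k1 c1 k2 c2 where p: "p1 = (k1, c1)" "p2 = (k2, c2)" by fastforce
  have c1: "c1 \<in> extensional L" and c2: "c2 \<in> extensional L"
    using p1 p2 p by (auto simp: comps_def PiE_def)
  have e: "c1(x := k1) = c2(x := k2)" using eq p by simp
  then have "k1 = k2" by (metis fun_upd_same)
  moreover have "c1 = c2"
  proof
    fix u show "c1 u = c2 u"
    proof (cases "u = x")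
      case True then show ?thesis using c1 c2 x by (simp add: extensional_def)
    next
      case False then show ?thesis using fun_cong[OF e, of u] by simp
    qed
  qed
  ultimately show "p1 = p2" using p by simp
qed

lemma comps_sum:
  assumes "finite L"
  shows "(\<Sum>c\<in>comps L a. \<Prod>u\<in>L. f (c u)) = convp f (card L) a"
  using assms
proof (induction L arbitrary: a rule: finite_induct)
  case empty
  then show ?case by (simp add: comps_empty)
next
  case (insert x L)
  have "(\<Sum>c\<in>comps (insert x L) a. \<Prod>u\<in>insert x L. f (c u))
      = (\<Sum>p\<in>(SIGMA k:{..a}. comps L (a - k)). \<Prod>u\<in>insert x L. f (((\<lambda>(k, c). c(x := k)) p) u))"
    unfolding comps_insert[OF insert.hyps] by (rule sum.reindex[OF comps_inj[OF insert.hyps(2)], unfolded comp_def])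
  also have "\<dots> = (\<Sum>k\<le>a. \<Sum>c\<in>comps L (a - k). \<Prod>u\<in>insert x L. f ((c(x := k)) u))"
  proof -
    have fin: "\<forall>k\<in>{..a}. finite (comps L (a - k))"
    proof
      fix k
      have "comps L (a - k) \<subseteq> L \<rightarrow>\<^sub>E {..a - k}" by (auto simp: comps_def)
      moreover have "finite (L \<rightarrow>\<^sub>E {..a - k})" using insert.hyps(1) by (rule finite_PiE) simp
      ultimately show "finite (comps L (a - k))" by (rule finite_subset)
    qed
    show ?thesis by (subst sum.Sigma[OF finite_atMost fin]) (simp add: case_prod_unfold)
  qed
  also have "\<dots> = (\<Sum>k\<le>a. \<Sum>c\<in>comps L (a - k). f k * (\<Prod>u\<in>L. f (c u)))"
  proof (intro sum.cong refl)
    fix k c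
    have "(\<Prod>u\<in>insert x L. f ((c(x := k)) u)) = f k * (\<Prod>u\<in>L. f ((c(x := k)) u))"
      using insert.hyps by simp
    also have "(\<Prod>u\<in>L. f ((c(x := k)) u)) = (\<Prod>u\<in>L. f (c u))"
      using insert.hyps by (intro prod.cong) auto
    finally show "(\<Prod>u\<in>insert x L. f ((c(x := k)) u)) = f k * (\<Prod>u\<in>L. f (c u))" .
  qed
  also have "\<dots> = (\<Sum>k\<le>a. f k * convp f (card L) (a - k))"
    by (simp add: sum_distrib_left[symmetric] insert.IH)
  also have "\<dots> = convp f (card (insert x L)) a" using insert.hyps by simp
  finally show ?case .
qed

lemma GW_prob: "is_GW_tree M T p \<Longrightarrow> prob_space M" by (simp add: is_GW_tree_def)
lemma GW_tree: "is_GW_tree M T p \<Longrightarrow> \<omega> \<in> space M \<Longrightarrow> is_tree (T \<omega>)" by (simp add: is_GW_tree_def)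
lemma GW_sets: "is_GW_tree M T p \<Longrightarrow> {\<omega>\<in>space M. restr h (T \<omega>) = t} \<in> sets M" by (simp add: is_GW_tree_def)

lemma GW_W:
  assumes GW: "is_GW_tree M T p" and t: "is_tree t" "height_le n t"
  shows "measure M {\<omega>\<in>space M. restr n (T \<omega>) = t} = W p n t"
proof (cases n)
  case 0
  have t0: "t = {[]}" using tree_height0 t 0 by simp
  have "{\<omega>\<in>space M. restr n (T \<omega>) = t} = space M"
    using GW_tree[OF GW] restr0 t0 0 by auto
  moreover have "W p n t = 1" using 0 by (simp add: W_def)
  ultimately show ?thesis using prob_space.prob_space[OF GW_prob[OF GW]] by simp
next
  case (Suc m)
  have "measure M {\<omega>\<in>space M. restr n (T \<omega>) = t} = (\<Prod>u\<in>restr (n - 1) t. p (kids t u))"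
    using GW t Suc unfolding is_GW_tree_def by auto
  moreover have "restr (n - 1) t = {u\<in>t. length u < n}" using Suc by (auto simp: restr_def)
  ultimately show ?thesis by (simp add: W_def)
qed

lemma gen_lev: "gen n t = card (lev t n)" by (simp add: gen_def lev_def)

lemma lev_finite: "is_tree t \<Longrightarrow> height_le n t \<Longrightarrow> finite (lev t n)"
  using tree_finite by (auto simp: lev_def)

lemma GW_step:
  assumes GW: "is_GW_tree M T p" and t: "is_tree t" "height_le n t"
  shows "{\<omega>\<in>space M. restr n (T \<omega>) = t \<and> gen (Suc n) (T \<omega>) = a} \<in> sets M \<and>
    measure M {\<omega>\<in>space M. restr n (T \<omega>) = t \<and> gen (Suc n) (T \<omega>) = a} = W p n t * convp p (gen n t) a"
proof -
  define L where "L = lev t n"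
  define C where "C = comps L a"
  define A where "A c = {\<omega>\<in>space M. restr (Suc n) (T \<omega>) = ext t n c}" for c
  have finL: "finite L" unfolding L_def using lev_finite[OF t] .
  have finC: "finite C"
  proof -
    have "C \<subseteq> L \<rightarrow>\<^sub>E {..a}" by (auto simp: C_def comps_def)
    moreover have "finite (L \<rightarrow>\<^sub>E {..a})" using finL by (rule finite_PiE) simp
    ultimately show ?thesis by (rule finite_subset)
  qed
  have seteq: "{\<omega>\<in>space M. restr n (T \<omega>) = t \<and> gen (Suc n) (T \<omega>) = a} = (\<Union>c\<in>C. A c)"
  proof (intro equalityI subsetI)
    fix \<omega> assume "\<omega> \<in> {\<omega>\<in>space M. restr n (T \<omega>) = t \<and> gen (Suc n) (T \<omega>) = a}"
    then have \<omega>: "\<omega> \<in> space M" "restr n (T \<omega>) = t" "gen (Suc n) (T \<omega>) = a" by auto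
    define t'' where "t'' = restr (Suc n) (T \<omega>)"
    have tt: "is_tree t''" unfolding t''_def by (rule restr_tree[OF GW_tree[OF GW \<omega>(1)]])
    have th: "height_le (Suc n) t''" unfolding t''_def by (rule restr_height)
    have tr: "restr n t'' = t" unfolding t''_def restr_restr using \<omega>(2) by simp
    have tx: "t'' = ext t n (kids t'')" by (rule ext_onto[OF tt th tr])
    define c where "c = restrict (kids t'') L"
    have ec: "ext t n c = ext t n (kids t'')" by (rule ext_cong) (simp add: c_def L_def)
    have sc: "sum c L = a"
    proof -
      have "sum c L = sum (kids t'') L" by (rule sum.cong) (auto simp: c_def)
      also have "\<dots> = gen (Suc n) (ext t n (kids t''))" unfolding L_def by (rule ext_gen[OF t, symmetric])
      also have "\<dots> = gen (Suc n) t''" using tx by simp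
      also have "\<dots> = a" unfolding t''_def using gen_restr[of "Suc n" "Suc n" "T \<omega>"] \<omega>(3) by simp
      finally show ?thesis .
    qed
    have cC: "c \<in> C"
    proof -
      have "c \<in> L \<rightarrow>\<^sub>E {..a}"
      proof (rule PiE_I)
        fix u assume u: "u \<in> L"
        have "c u \<le> sum c L" by (rule member_le_sum[OF u _ finL]) simp
        then show "c u \<in> {..a}" using sc by simp
      next
        fix u assume "u \<notin> L" then show "c u = undefined" by (simp add: c_def)
      qed
      then show ?thesis using sc by (simp add: C_def comps_def)
    qed
    have "\<omega> \<in> A c" unfolding A_def using \<omega>(1) tx ec by (simp add: t''_def[symmetric])
    then show "\<omega> \<in> (\<Union>c\<in>C. A c)" using cC by blast
  next
    fix \<omega> assume "\<omega> \<in> (\<Union>c\<in>C. A c)"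
    then obtain c where cC: "c \<in> C" and \<omega>: "\<omega> \<in> space M" "restr (Suc n) (T \<omega>) = ext t n c"
      by (auto simp: A_def)
    have "restr n (T \<omega>) = restr n (restr (Suc n) (T \<omega>))" by (simp add: restr_restr)
    also have "\<dots> = t" using \<omega>(2) ext_restr[OF t(2)] by simp
    finally have r: "restr n (T \<omega>) = t" .
    have "gen (Suc n) (T \<omega>) = gen (Suc n) (restr (Suc n) (T \<omega>))" by (simp add: gen_restr)
    also have "\<dots> = sum c L" using \<omega>(2) ext_gen[OF t] by (simp add: L_def)
    also have "\<dots> = a" using cC by (simp add: C_def comps_def)
    finally show "\<omega> \<in> {\<omega>\<in>space M. restr n (T \<omega>) = t \<and> gen (Suc n) (T \<omega>) = a}" using r \<omega>(1) by simp
  qed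
  have Asets: "A ` C \<subseteq> sets M" using GW_sets[OF GW] by (auto simp: A_def)
  have disj: "disjoint_family_on A C"
    unfolding disjoint_family_on_def
  proof (intro ballI impI)
    fix c c' assume c: "c \<in> C" "c' \<in> C" "c \<noteq> c'"
    have "ext t n c \<noteq> ext t n c'"
    proof
      assume e: "ext t n c = ext t n c'"
      have "c = c'"
      proof
        fix u show "c u = c' u"
        proof (cases "u \<in> L")
          case True
          then show ?thesis using ext_kids_lev[OF t(2), of u c] ext_kids_lev[OF t(2), of u c'] e by (simp add: L_def)
        next
          case False
          then show ?thesis using c(1,2) by (auto simp: C_def comps_def PiE_def extensional_def)
        qed
      qed
      then show False using c(3) by simp
    qed
    then show "A c \<inter> A c' = {}" by (auto simp: A_def)
  qed
  interpret prob_space M using GW_prob[OF GW] .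
  have "measure M (\<Union>c\<in>C. A c) = (\<Sum>c\<in>C. measure M (A c))"
    by (rule finite_measure_finite_Union[OF finC Asets disj])
  also have "\<dots> = (\<Sum>c\<in>C. W p n t * (\<Prod>u\<in>L. p (c u)))"
  proof (rule sum.cong[OF refl])
    fix c assume "c \<in> C"
    have "measure M (A c) = W p (Suc n) (ext t n c)" unfolding A_def
      by (rule GW_W[OF GW ext_tree[OF t] ext_height[OF t(2)]])
    also have "\<dots> = W p n t * (\<Prod>u\<in>L. p (c u))" unfolding L_def by (rule ext_W[OF t])
    finally show "measure M (A c) = W p n t * (\<Prod>u\<in>L. p (c u))" .
  qed
  also have "\<dots> = W p n t * convp p (gen n t) a"
    using comps_sum[OF finL, of p a] unfolding C_def L_def gen_lev by (simp add: sum_distrib_left[symmetric])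
  finally show ?thesis using seteq Asets finC by (auto intro!: sets.finite_UN)
qed

lemma prop_union:
  assumes P: "prob_space M" and I: "countable I"
    and XS: "\<And>i. i \<in> I \<Longrightarrow> X i \<in> sets M" and YS: "\<And>i. i \<in> I \<Longrightarrow> Y i \<in> sets M"
    and dX: "disjoint_family_on X I" and dY: "disjoint_family_on Y I"
    and k: "0 \<le> k" and prp: "\<And>i. i \<in> I \<Longrightarrow> measure M (Y i) = k * measure M (X i)"
  shows "(\<Union>i\<in>I. Y i) \<in> sets M \<and> measure M (\<Union>i\<in>I. Y i) = k * measure M (\<Union>i\<in>I. X i)"
proof -
  interpret prob_space M by (rule P)
  have s1: "(\<Union>i\<in>I. Y i) \<in> sets M" using I YS by (intro sets.countable_UN') auto
  have "emeasure M (\<Union>i\<in>I. Y i) = (\<integral>\<^sup>+i. emeasure M (Y i) \<partial>count_space I)"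
    by (rule emeasure_UN_countable[OF YS I dY])
  also have "\<dots> = (\<integral>\<^sup>+i. ennreal k * emeasure M (X i) \<partial>count_space I)"
  proof (rule nn_integral_cong)
    fix i assume "i \<in> space (count_space I)"
    then have i: "i \<in> I" by simp
    have "emeasure M (Y i) = ennreal (measure M (Y i))" by (simp add: emeasure_eq_measure)
    also have "\<dots> = ennreal k * ennreal (measure M (X i))" using prp[OF i] k by (simp add: ennreal_mult)
    also have "\<dots> = ennreal k * emeasure M (X i)" by (simp add: emeasure_eq_measure)
    finally show "emeasure M (Y i) = ennreal k * emeasure M (X i)" .
  qed
  also have "\<dots> = ennreal k * (\<integral>\<^sup>+i. emeasure M (X i) \<partial>count_space I)"
    by (rule nn_integral_cmult) simp
  also have "\<dots> = ennreal k * emeasure M (\<Union>i\<in>I. X i)"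
    by (simp add: emeasure_UN_countable[OF XS I dX])
  finally have "emeasure M (\<Union>i\<in>I. Y i) = ennreal k * emeasure M (\<Union>i\<in>I. X i)" .
  then have "ennreal (measure M (\<Union>i\<in>I. Y i)) = ennreal (k * measure M (\<Union>i\<in>I. X i))"
    using k by (simp add: emeasure_eq_measure ennreal_mult)
  then have "measure M (\<Union>i\<in>I. Y i) = k * measure M (\<Union>i\<in>I. X i)"
    using k by (simp add: ennreal_inj)
  then show ?thesis using s1 by simp
qed

lemma tree_set_countable: "countable {t'. is_tree t' \<and> height_le n t' \<and> P t'}"
proof -
  have "{t'. is_tree t' \<and> height_le n t' \<and> P t'} \<subseteq> Collect finite"
    using tree_finite by auto
  then show ?thesis by (rule countable_subset) (rule countable_Collect_finite)
qed

lemma GW_gen: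
  assumes GW: "is_GW_tree M T p" and pnn: "\<And>k. 0 \<le> p k"
    and t: "is_tree t" "height_le h t"
  shows "{\<omega>\<in>space M. restr h (T \<omega>) = t \<and> gen (h + m) (T \<omega>) = a} \<in> sets M \<and>
    measure M {\<omega>\<in>space M. restr h (T \<omega>) = t \<and> gen (h + m) (T \<omega>) = a} =
      measure M {\<omega>\<in>space M. restr h (T \<omega>) = t} * Qk p m (gen h t) a"
proof (induction m arbitrary: a)
  case 0
  have "{\<omega>\<in>space M. restr h (T \<omega>) = t \<and> gen (h + 0) (T \<omega>) = a} =
      (if a = gen h t then {\<omega>\<in>space M. restr h (T \<omega>) = t} else {})"
  proof -
    have "gen h (T \<omega>) = gen h t" if "restr h (T \<omega>) = t" for \<omega>
      using gen_restr[of h h "T \<omega>"] that by simp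
    then show ?thesis by auto
  qed
  then show ?case using GW_sets[OF GW] by auto
next
  case (Suc m)
  interpret prob_space M using GW_prob[OF GW] .
  define n where "n = h + m"
  define At where "At = {\<omega>\<in>space M. restr h (T \<omega>) = t}"
  define B where "B b = {\<omega>\<in>space M. restr h (T \<omega>) = t \<and> gen n (T \<omega>) = b \<and> gen (Suc n) (T \<omega>) = a}" for b
  define G where "G b = {\<omega>\<in>space M. restr h (T \<omega>) = t \<and> gen n (T \<omega>) = b}" for b
  have hn: "h \<le> n" by (simp add: n_def)
  have Bprop: "B b \<in> sets M \<and> measure M (B b) = convp p b a * measure M (G b)" for b
  proof -
    define S where "S = {t'. is_tree t' \<and> height_le n t' \<and> (restr h t' = t \<and> gen n t' = b)}"
    define X where "X t' = {\<omega>\<in>space M. restr n (T \<omega>) = t'}" for t'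
    define Y where "Y t' = {\<omega>\<in>space M. restr n (T \<omega>) = t' \<and> gen (Suc n) (T \<omega>) = a}" for t'
    have cS: "countable S" unfolding S_def by (rule tree_set_countable)
    have GX: "G b = (\<Union>t'\<in>S. X t')"
    proof (intro equalityI subsetI)
      fix \<omega> assume "\<omega> \<in> G b"
      then have \<omega>: "\<omega> \<in> space M" "restr h (T \<omega>) = t" "gen n (T \<omega>) = b" by (auto simp: G_def)
      have "restr n (T \<omega>) \<in> S" unfolding S_def using \<omega> hn
        by (auto simp: restr_tree[OF GW_tree[OF GW \<omega>(1)]] restr_height restr_restr min_def gen_restr)
      then show "\<omega> \<in> (\<Union>t'\<in>S. X t')" using \<omega>(1) by (auto simp: X_def)
    next
      fix \<omega> assume "\<omega> \<in> (\<Union>t'\<in>S. X t')"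
      then obtain t' where t': "t' \<in> S" "\<omega> \<in> space M" "restr n (T \<omega>) = t'" by (auto simp: X_def)
      have "restr h (T \<omega>) = restr h (restr n (T \<omega>))" using hn by (simp add: restr_restr min_def)
      moreover have "gen n (T \<omega>) = gen n (restr n (T \<omega>))" by (simp add: gen_restr)
      ultimately show "\<omega> \<in> G b" using t' by (auto simp: G_def S_def)
    qed
    have BY: "B b = (\<Union>t'\<in>S. Y t')"
    proof -
      have "B b = G b \<inter> {\<omega>. gen (Suc n) (T \<omega>) = a}" by (auto simp: B_def G_def)
      also have "\<dots> = (\<Union>t'\<in>S. X t' \<inter> {\<omega>. gen (Suc n) (T \<omega>) = a})" unfolding GX by auto
      also have "\<dots> = (\<Union>t'\<in>S. Y t')" by (auto simp: X_def Y_def)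
      finally show ?thesis .
    qed
    have XS: "X t' \<in> sets M" for t' unfolding X_def by (rule GW_sets[OF GW])
    have YS: "Y t' \<in> sets M" if "t' \<in> S" for t'
      using GW_step[OF GW, of t' n a] that unfolding S_def Y_def by auto
    have dX: "disjoint_family_on X S" unfolding disjoint_family_on_def X_def by auto
    have dY: "disjoint_family_on Y S" unfolding disjoint_family_on_def Y_def by auto
    have k: "0 \<le> convp p b a" by (rule convp_nonneg[OF pnn])
    have pr: "measure M (Y t') = convp p b a * measure M (X t')" if "t' \<in> S" for t'
    proof -
      have tt: "is_tree t'" "height_le n t'" "gen n t' = b" using that by (auto simp: S_def)
      have "measure M (Y t') = W p n t' * convp p b a" using GW_step[OF GW tt(1,2), of a] tt(3) by (simp add: Y_def)
      moreover have "measure M (X t') = W p n t'" unfolding X_def by (rule GW_W[OF GW tt(1,2)])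
      ultimately show ?thesis by simp
    qed
    show ?thesis using prop_union[OF GW_prob[OF GW] cS XS YS dX dY k pr] GX BY by simp
  qed
  have Gm: "measure M (G b) = measure M At * Qk p m (gen h t) b" for b
    using Suc.IH[of b] by (simp add: G_def At_def n_def)
  have union: "{\<omega>\<in>space M. restr h (T \<omega>) = t \<and> gen (h + Suc m) (T \<omega>) = a} = (\<Union>b. B b)"
    by (auto simp: B_def n_def)
  have Bsets: "range B \<subseteq> sets M" using Bprop by auto
  have dB: "disjoint_family B" unfolding disjoint_family_on_def B_def by auto
  have sums: "(\<lambda>b. measure M (B b)) sums measure M (\<Union>b. B b)"
    by (rule measure_UNION[OF Bsets dB]) simp
  have Bm: "measure M (B b) = measure M At * (Qk p m (gen h t) b * convp p b a)" for b
    using Bprop[of b] Gm[of b] by (simp add: mult_ac)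
  have "measure M (\<Union>b. B b) = measure M At * Qk p (Suc m) (gen h t) a"
  proof (cases "measure M At = 0")
    case True
    have "(\<Union>b. B b) \<subseteq> At" by (auto simp: B_def At_def)
    moreover have "At \<in> sets M" unfolding At_def by (rule GW_sets[OF GW])
    ultimately have "measure M (\<Union>b. B b) \<le> measure M At" using Bsets
      by (intro finite_measure_mono) auto
    moreover have "0 \<le> measure M (\<Union>b. B b)" by (rule measure_nonneg)
    ultimately have "measure M (\<Union>b. B b) = 0" using True by linarith
    then show ?thesis using True by simp
  next
    case False
    have "(\<lambda>b. measure M At * (Qk p m (gen h t) b * convp p b a)) sums (measure M (\<Union>b. B b))"
      using sums by (simp add: Bm)
    from sums_divide[OF this, of "measure M At"]
    have "(\<lambda>b. Qk p m (gen h t) b * convp p b a) sums (measure M (\<Union>b. B b) / measure M At)"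
      using False by simp
    then have "Qk p (Suc m) (gen h t) a = measure M (\<Union>b. B b) / measure M At"
      by (simp add: sums_iff)
    then show ?thesis using False by simp
  qed
  moreover have "(\<Union>b. B b) \<in> sets M" using Bsets by auto
  ultimately show ?case unfolding union At_def by simp
qed

lemma geom_mean: "0 < q \<Longrightarrow> q < 1 \<Longrightarrow> offspring_mean (geom_offspring q) = 1"
proof -
  assume q: "0 < q" "q < 1"
  have c: "norm (1 - q) < 1" using q by simp
  have "(\<lambda>k. q^2 / (1 - q) * ((1 - q)^k * real k)) sums (q^2 / (1 - q) * ((1 - q) / (1 - (1 - q))^2))"
    by (rule sums_mult[OF geometric_sums_times_n[OF c]])
  moreover have "q^2 / (1 - q) * ((1 - q) / (1 - (1 - q))^2) = 1" using q by (simp add: field_simps power2_eq_square)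
  moreover have "q^2 / (1 - q) * ((1 - q)^k * real k) = real k * geom_offspring q k" for k
  proof (cases k)
    case 0 then show ?thesis by simp
  next
    case (Suc k') then show ?thesis using q by (simp add: geom_offspring_def field_simps)
  qed
  ultimately have "(\<lambda>k. real k * geom_offspring q k) sums 1" by simp
  then show ?thesis by (simp add: offspring_mean_def sums_iff)
qed

lemma spine_length: "length (spine V h) = h" by (simp add: spine_def)

lemma take_snoc_in:
  assumes t: "is_tree t" and v: "v \<in> t" and k: "k < length v"
  shows "take k v @ [v ! k] \<in> t"
proof -
  have "take k v @ [v ! k] = take (Suc k) v" using k by (simp add: take_Suc_conv_app_nth)
  moreover have "take (Suc k) v @ drop (Suc k) v \<in> t" using v by simp
  ultimately show ?thesis using tree_prefix[OF t] by metis
qed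

lemma Kesten_measure:
  assumes K: "is_Kesten_tree N Tk V p" and mean: "offspring_mean p = 1"
    and h: "1 \<le> h" and t: "is_tree t" "height_le h t"
  shows "measure N {\<omega>\<in>space N. restr h (Tk \<omega>) = t} = real (gen h t) * W p h t"
proof -
  have P: "prob_space N" using K by (simp add: is_Kesten_tree_def)
  interpret prob_space N by (rule P)
  have Ktree: "\<And>\<omega>. \<omega> \<in> space N \<Longrightarrow> is_tree (Tk \<omega>) \<and> (\<forall>h. spine (V \<omega>) h \<in> Tk \<omega>)"
    using K by (simp add: is_Kesten_tree_def)
  have Ksets: "\<And>h t v. {\<omega>\<in>space N. restr h (Tk \<omega>) = t \<and> spine (V \<omega>) h = v} \<in> sets N"
    using K by (simp add: is_Kesten_tree_def)
  have Kform: "\<And>v. length v = h \<Longrightarrow> v \<in> t \<Longrightarrow> measure N {\<omega>\<in>space N. restr h (Tk \<omega>) = t \<and> spine (V \<omega>) h = v} =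
          (\<Prod>u\<in>restr (h - 1) t.
             if u = take (length u) v then size_biased p (kids t u) / real (kids t u)
             else p (kids t u))"
    using K h t unfolding is_Kesten_tree_def by blast
  define A where "A v = {\<omega>\<in>space N. restr h (Tk \<omega>) = t \<and> spine (V \<omega>) h = v}" for v
  define L where "L = lev t h"
  have finL: "finite L" unfolding L_def by (rule lev_finite[OF t])
  have eq: "{\<omega>\<in>space N. restr h (Tk \<omega>) = t} = (\<Union>v\<in>L. A v)"
  proof (intro equalityI subsetI)
    fix \<omega> assume "\<omega> \<in> {\<omega>\<in>space N. restr h (Tk \<omega>) = t}"
    then have \<omega>: "\<omega> \<in> space N" "restr h (Tk \<omega>) = t" by auto
    have "spine (V \<omega>) h \<in> Tk \<omega>" using Ktree[OF \<omega>(1)] by blast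
    then have "spine (V \<omega>) h \<in> L" using \<omega>(2) spine_length[of "V \<omega>" h]
      by (auto simp: L_def lev_def restr_def)
    then show "\<omega> \<in> (\<Union>v\<in>L. A v)" using \<omega> by (auto simp: A_def)
  next
    fix \<omega> assume "\<omega> \<in> (\<Union>v\<in>L. A v)" then show "\<omega> \<in> {\<omega>\<in>space N. restr h (Tk \<omega>) = t}" by (auto simp: A_def)
  qed
  have Asets: "A ` L \<subseteq> sets N" using Ksets by (auto simp: A_def)
  have dA: "disjoint_family_on A L" unfolding disjoint_family_on_def A_def by auto
  have Am: "measure N (A v) = W p h t" if v: "v \<in> L" for v
  proof -
    have vl: "length v = h" "v \<in> t" using v by (auto simp: L_def lev_def)
    have "measure N (A v) = (\<Prod>u\<in>restr (h - 1) t.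
             if u = take (length u) v then size_biased p (kids t u) / real (kids t u)
             else p (kids t u))" unfolding A_def by (rule Kform[OF vl])
    also have "\<dots> = (\<Prod>u\<in>restr (h - 1) t. p (kids t u))"
    proof (rule prod.cong[OF refl])
      fix u assume u: "u \<in> restr (h - 1) t"
      show "(if u = take (length u) v then size_biased p (kids t u) / real (kids t u) else p (kids t u)) = p (kids t u)"
      proof (cases "u = take (length u) v")
        case True
        have lu: "length u < length v" using u vl h by (auto simp: restr_def)
        have "take (length u) v @ [v ! length u] \<in> t" by (rule take_snoc_in[OF t(1) vl(2) lu])
        from tree_child'[OF t(1) this] have "1 \<le> kids t (take (length u) v)" by linarith
        then have k: "1 \<le> kids t u" using True by simp
        then show ?thesis using True mean by (simp add: size_biased_def)
      next
        case False then show ?thesis by simp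
      qed
    qed
    also have "\<dots> = W p h t"
    proof -
      have "restr (h - 1) t = {u\<in>t. length u < h}" using h by (auto simp: restr_def)
      then show ?thesis by (simp add: W_def)
    qed
    finally show ?thesis .
  qed
  have "measure N {\<omega>\<in>space N. restr h (Tk \<omega>) = t} = (\<Sum>v\<in>L. measure N (A v))"
    unfolding eq by (rule finite_measure_finite_Union[OF finL Asets dA])
  also have "\<dots> = (\<Sum>v\<in>L. W p h t)" by (rule sum.cong[OF refl Am])
  also have "\<dots> = real (gen h t) * W p h t" by (simp add: L_def gen_lev)
  finally show ?thesis .
qed

theorem corollary6p2:
  fixes q :: real and M :: "'a measure" and T :: "'a \<Rightarrow> tree"
    and N :: "'b measure" and Tk :: "'b \<Rightarrow> tree" and V :: "'b \<Rightarrow> nat \<Rightarrow> nat"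
    and \<alpha> :: "nat \<Rightarrow> nat"
  assumes "0 < q" and "q < 1"
    and "is_GW_tree M T (geom_offspring q)"
    and "is_Kesten_tree N Tk V (geom_offspring q)"
    and "\<forall>n. \<alpha> n > 0"
    and "(\<lambda>n. real (\<alpha> n) / real n ^ 2) \<longlonglongrightarrow> 0"
  shows "\<forall>h t. (\<lambda>n. measure M {\<omega>\<in>space M. restr h (T \<omega>) = t \<and> gen n (T \<omega>) = \<alpha> n}
                    / measure M {\<omega>\<in>space M. gen n (T \<omega>) = \<alpha> n})
             \<longlonglongrightarrow> measure N {\<omega>\<in>space N. restr h (Tk \<omega>) = t}"
proof (intro allI)
  fix h :: nat and t :: tree
  note q = assms(1,2) and GW = assms(3) and K = assms(4) and \<alpha> = assms(5) and lim = assms(6)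
  let ?p = "geom_offspring q"
  have pnn: "0 \<le> ?p k" for k using q by (simp add: geom_nonneg)
  interpret M: prob_space M using GW_prob[OF GW] .
  interpret N: prob_space N using K by (simp add: is_Kesten_tree_def)
  have Ktree: "\<And>\<omega>. \<omega> \<in> space N \<Longrightarrow> is_tree (Tk \<omega>)"
    using K by (simp add: is_Kesten_tree_def)
  have den: "measure M {\<omega>\<in>space M. gen n (T \<omega>) = \<alpha> n} = geom_offspring (bet q n) (\<alpha> n)" for n
  proof -
    have t0: "is_tree {[]}" "height_le 0 {[]}"
      by (auto simp: is_tree_def height_le_def)
    have s1: "{\<omega>\<in>space M. restr 0 (T \<omega>) = {[]} \<and> gen (0 + n) (T \<omega>) = \<alpha> n} = {\<omega>\<in>space M. gen n (T \<omega>) = \<alpha> n}"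
      using GW_tree[OF GW] restr0 by auto
    have s2: "{\<omega>\<in>space M. restr 0 (T \<omega>) = {[]}} = space M"
      using GW_tree[OF GW] restr0 by auto
    have g0: "gen 0 {[]} = 1" by (simp add: gen_def)
    have "measure M {\<omega>\<in>space M. gen n (T \<omega>) = \<alpha> n} = Qk ?p n 1 (\<alpha> n)"
      using GW_gen[OF GW pnn t0, of n "\<alpha> n"] s1 s2 g0 M.prob_space by simp
    also have "\<dots> = geom_offspring (bet q n) (\<alpha> n)"
      unfolding Q_eq[OF q] by (rule convp_one)
    finally show ?thesis .
  qed
  show "(\<lambda>n. measure M {\<omega>\<in>space M. restr h (T \<omega>) = t \<and> gen n (T \<omega>) = \<alpha> n}
                    / measure M {\<omega>\<in>space M. gen n (T \<omega>) = \<alpha> n})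
             \<longlonglongrightarrow> measure N {\<omega>\<in>space N. restr h (Tk \<omega>) = t}"
  proof (cases "is_tree t \<and> height_le h t")
    case False
    have e1: "{\<omega>\<in>space M. restr h (T \<omega>) = t \<and> gen n (T \<omega>) = \<alpha> n} = {}" for n
      using False restr_tree[OF GW_tree[OF GW]] restr_height by blast
    have e2: "{\<omega>\<in>space N. restr h (Tk \<omega>) = t} = {}"
      using False restr_tree[OF Ktree] restr_height by blast
    show ?thesis unfolding e1 e2 by simp
  next
    case True
    then have t: "is_tree t" "height_le h t" by auto
    define j where "j = gen h t"
    have num: "measure M {\<omega>\<in>space M. restr h (T \<omega>) = t \<and> gen n (T \<omega>) = \<alpha> n} =
        W ?p h t * convp (geom_offspring (bet q (n - h))) j (\<alpha> n)" if n: "h \<le> n" for n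
    proof -
      have nn: "h + (n - h) = n" using n by simp
      show ?thesis
        using GW_gen[OF GW pnn t, of "n - h" "\<alpha> n"] unfolding nn
        by (simp add: GW_W[OF GW t] Q_eq[OF q] j_def)
    qed
    have rhs: "measure N {\<omega>\<in>space N. restr h (Tk \<omega>) = t} = W ?p h t * real j"
    proof (cases "h = 0")
      case True
      have t0: "t = {[]}" using tree_height0 t True by simp
      have "{\<omega>\<in>space N. restr h (Tk \<omega>) = t} = space N" using Ktree restr0 True t0 by auto
      moreover have "j = 1" unfolding j_def t0 True by (simp add: gen_def)
      moreover have "W ?p h t = 1" using True by (simp add: W_def)
      ultimately show ?thesis using N.prob_space by simp
    next
      case False
      then show ?thesis using Kesten_measure[OF K geom_mean[OF q] _ t] by (simp add: j_def)
    qed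
    have "(\<lambda>n. W ?p h t * (convp (geom_offspring (bet q (n - h))) j (\<alpha> n) / geom_offspring (bet q n) (\<alpha> n)))
        \<longlonglongrightarrow> W ?p h t * real j"
      by (rule tendsto_mult[OF tendsto_const ratio_lim[OF q \<alpha> lim]])
    moreover have "eventually (\<lambda>n. W ?p h t * (convp (geom_offspring (bet q (n - h))) j (\<alpha> n) / geom_offspring (bet q n) (\<alpha> n)) =
        measure M {\<omega>\<in>space M. restr h (T \<omega>) = t \<and> gen n (T \<omega>) = \<alpha> n} / measure M {\<omega>\<in>space M. gen n (T \<omega>) = \<alpha> n}) sequentially"
      using eventually_ge_at_top[of h] by eventually_elim (simp add: num den)
    ultimately show ?thesis unfolding rhs by (rule Lim_transform_eventually)
  qed
qed

end
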